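(* Let $T\ge 2$ and let the standing assumptions hold. Suppose that for some $\alpha\in[1/T,1]$ every $f_t$, $t=1,\dots,T$, is $\alpha$-exp-concave on $\mathcal{X}$. Let $\widehat{\alpha}\in\mathcal{P}_{exp}$ satisfy $\widehat{\alpha}\le\alpha\le2\widehat{\alpha}$ and let $\beta=\frac12\min\{\frac{1}{4GD},\alpha\}$. Then USC satisfies \[ \sum_{t=1}^T f_t(\mathbf{x}_t)-\min_{\mathbf{x}\in\mathcal{X}}\sum_{t=1}^T f_t(\mathbf{x})\le \min_{A\in\mathcal{A}_{exp}} R(A,\widehat{\alpha}) + 2\Gamma GD\left(2+\frac{1}{\sqrt{\ln|\mathcal{E}|}}\right)+\frac{\Gamma^2}{2\beta\ln|\mathcal{E}|}. \] In particular, when $|\mathcal{A}_{str}|,|\mathcal{A}_{exp}|,|\mathcal{A}_{con}|$ are bounded by constants, the additive term is $O\big(\frac{\log\log T}{\alpha}\big)$.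
   Context: Setting (online convex optimization): $\mathcal{X}\subset\mathbb{R}^d$ is a nonempty closed convex set with $\max_{\mathbf{x},\mathbf{y}\in\mathcal{X}}\|\mathbf{x}-\mathbf{y}\|\le D$. For $t=1,\dots,T$, $f_t:\mathcal{X}\to\mathbb{R}$ are convex differentiable functions with $\max_{\mathbf{x}\in\mathcal{X}}\|\nabla f_t(\mathbf{x})\|\le G$. At round $t$ a learner outputs $\mathbf{x}_t\in\mathcal{X}$ depending only on $f_1,\dots,f_{t-1}$, then $f_t$ is revealed. An online algorithm (expert) is any such procedure. A function $f$ is $\alpha$-exp-concave on $\mathcal{X}$ if $\mathbf{x}\mapsto\exp(-\alpha f(\mathbf{x}))$ is concave on $\mathcal{X}$. Algorithm USC: Let $N=\lceil\log_2T\rceil$ and $\mathcal{P}_{str}=\mathcal{P}_{exp}=\{2^k/T: k=0,1,\dots,N\}$. Let $\mathcal{A}_{str},\mathcal{A}_{exp}$ be finite sets of online algorithms each taking a positive parameter, and $\mathcal{A}_{con}$ a finite set of online algorithms. The expert set $\mathcal{E}$ consists of the experts $E(A,\lambda')$ ($A$ run with parameter $\lambda'$) for $A\in\mathcal{A}_{str},\lambda'\in\mathcal{P}_{str}$; $E(A,\alpha')$ for $A\in\mathcal{A}_{exp},\alpha'\in\mathcal{P}_{exp}$; and $E(A)$ for $A\in\mathcal{A}_{con}$. Index them $E^1,\dots,E^{|\mathcal{E}|}$; every expert receives the full functions $f_1,f_2,\dots$ and outputs $\mathbf{x}_t^i\in\mathcal{X}$ at round $t$. Fix any $\bar{\mathbf{x}}\in\mathcal{X}$.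 USC outputs $\mathbf{x}_t=\sum_i p_t^i\mathbf{x}_t^i$ with weights given by Adapt-ML-Prod on the losses $\ell_t^i=\frac{\langle\nabla f_t(\mathbf{x}_t),\mathbf{x}_t^i-\bar{\mathbf{x}}\rangle+GD}{2GD}\in[0,1]$, $\ell_t=\sum_ip_t^i\ell_t^i$: namely $p_t^i=\eta_{t-1}^iw_{t-1}^i/\sum_j\eta_{t-1}^jw_{t-1}^j$, where $\eta_{t-1}^i=\min\{\frac12,\sqrt{\ln|\mathcal{E}|/(1+\sum_{s=1}^{t-1}(\ell_s-\ell_s^i)^2)}\}$ for $t\ge1$, $w_0^i=1/|\mathcal{E}|$, and $w_{t-1}^i=\big(w_{t-2}^i(1+\eta_{t-2}^i(\ell_{t-1}-\ell_{t-1}^i))\big)^{\eta_{t-1}^i/\eta_{t-2}^i}$ for $t\ge2$. Define $\Gamma=3\ln|\mathcal{E}|+\ln\big(1+\frac{|\mathcal{E}|}{2e}(1+\ln(T+1))\big)$. For $A\in\mathcal{A}_{exp}$ and $\alpha'>0$, $R(A,\alpha')$ denotes a regret bound of $A$: a number such that whenever $f_1,\dots,f_T$ satisfy the setting and are all $\alpha'$-exp-concave, the outputs $\mathbf{y}_t$ of $A$ run with parameter $\alpha'$ satisfy $\sum_t f_t(\mathbf{y}_t)-\min_{\mathbf{x}\in\mathcal{X}}\sum_tf_t(\mathbf{x})\le R(A,\alpha')$. *)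

theory Defs
  imports "HOL-Analysis.Analysis"
begin

text \<open>An online algorithm (expert) maps the list of previously revealed functions
  [f_1, ..., f_(t-1)] to its output at round t.  Parametrised algorithms additionally
  take a positive real parameter.\<close>

type_synonym 'a alg = "('a \<Rightarrow> real) list \<Rightarrow> 'a"
type_synonym 'a palg = "real \<Rightarrow> ('a \<Rightarrow> real) list \<Rightarrow> 'a"

definition hist :: "(nat \<Rightarrow> 'a \<Rightarrow> real) \<Rightarrow> nat \<Rightarrow> ('a \<Rightarrow> real) list" where
  "hist f t = map f [1..<t]"

definition exp_concave_on :: "real \<Rightarrow> 'a::real_vector set \<Rightarrow> ('a \<Rightarrow> real) \<Rightarrow> bool" where
  "exp_concave_on \<alpha> X h \<longleftrightarrow> concave_on X (\<lambda>x. exp (- \<alpha> * h x))"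

definition oco_domain :: "'a::euclidean_space set \<Rightarrow> real \<Rightarrow> bool" where
  "oco_domain X D \<longleftrightarrow> X \<noteq> {} \<and> closed X \<and> convex X \<and> (\<forall>x\<in>X. \<forall>y\<in>X. norm (x - y) \<le> D)"

definition oco_fns :: "'a::euclidean_space set \<Rightarrow> real \<Rightarrow> nat \<Rightarrow> (nat \<Rightarrow> 'a \<Rightarrow> real) \<Rightarrow> (nat \<Rightarrow> 'a \<Rightarrow> 'a) \<Rightarrow> bool" where
  "oco_fns X G T f g \<longleftrightarrow> (\<forall>t\<in>{1..T}. convex_on X (f t) \<and>
      (\<forall>x\<in>X. (f t has_derivative (\<lambda>h. inner (g t x) h)) (at x within X) \<and> norm (g t x) \<le> G))"

definition regret :: "'a set \<Rightarrow> nat \<Rightarrow> (nat \<Rightarrow> 'a \<Rightarrow> real) \<Rightarrow> (nat \<Rightarrow> 'a) \<Rightarrow> real" where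
  "regret X T f y = (\<Sum>t=1..T. f t (y t)) - (INF x\<in>X. \<Sum>t=1..T. f t x)"

definition usc_N :: "nat \<Rightarrow> nat" where
  "usc_N T = nat \<lceil>log 2 (real T)\<rceil>"

definition usc_grid :: "nat \<Rightarrow> real set" where
  "usc_grid T = {2 ^ k / real T | k. k \<le> usc_N T}"

datatype 'a expert =
    EStr "'a palg" real
  | EExp "'a palg" real
  | ECon "'a alg"

fun expert_out :: "'a expert \<Rightarrow> 'a alg" where
  "expert_out (EStr A l) = A l"
| "expert_out (EExp A a) = A a"
| "expert_out (ECon A) = A"

definition usc_experts :: "nat \<Rightarrow> 'a palg set \<Rightarrow> 'a palg set \<Rightarrow> 'a alg set \<Rightarrow> 'a expert set" where
  "usc_experts T As Ae Ac =
     {EStr A l | A l. A \<in> As \<and> l \<in> usc_grid T}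
   \<union> {EExp A a | A a. A \<in> Ae \<and> a \<in> usc_grid T}
   \<union> ECon ` Ac"

text \<open>L s i = loss l_s^i of expert i at round s, l s = mixed loss l_s; n = number of experts.\<close>

definition amlp_eta :: "nat \<Rightarrow> (nat \<Rightarrow> 'e \<Rightarrow> real) \<Rightarrow> (nat \<Rightarrow> real) \<Rightarrow> nat \<Rightarrow> 'e \<Rightarrow> real" where
  "amlp_eta n L l t i = min (1/2) (sqrt (ln (real n) / (1 + (\<Sum>s=1..t. (l s - L s i)^2))))"

fun amlp_w :: "nat \<Rightarrow> (nat \<Rightarrow> 'e \<Rightarrow> real) \<Rightarrow> (nat \<Rightarrow> real) \<Rightarrow> nat \<Rightarrow> 'e \<Rightarrow> real" where
  "amlp_w n L l 0 i = 1 / real n"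
| "amlp_w n L l (Suc t) i =
     (amlp_w n L l t i * (1 + amlp_eta n L l t i * (l (Suc t) - L (Suc t) i)))
       powr (amlp_eta n L l (Suc t) i / amlp_eta n L l t i)"

definition amlp_p :: "'e set \<Rightarrow> (nat \<Rightarrow> 'e \<Rightarrow> real) \<Rightarrow> (nat \<Rightarrow> real) \<Rightarrow> nat \<Rightarrow> 'e \<Rightarrow> real" where
  "amlp_p E L l t i =
     amlp_eta (card E) L l (t - 1) i * amlp_w (card E) L l (t - 1) i /
     (\<Sum>j\<in>E. amlp_eta (card E) L l (t - 1) j * amlp_w (card E) L l (t - 1) j)"

definition usc_point :: "'a::euclidean_space expert set \<Rightarrow> (nat \<Rightarrow> 'a \<Rightarrow> real) \<Rightarrow>
    (nat \<Rightarrow> 'a expert \<Rightarrow> real) \<Rightarrow> (nat \<Rightarrow> real) \<Rightarrow> nat \<Rightarrow> 'a" where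
  "usc_point E f L l t = (\<Sum>i\<in>E. amlp_p E L l t i *\<^sub>R expert_out i (hist f t))"

text \<open>usc_state ... t = the loss vectors and mixed losses of rounds 1..t.\<close>
fun usc_state :: "'a::euclidean_space expert set \<Rightarrow> (nat \<Rightarrow> 'a \<Rightarrow> real) \<Rightarrow> (nat \<Rightarrow> 'a \<Rightarrow> 'a) \<Rightarrow>
    real \<Rightarrow> real \<Rightarrow> 'a \<Rightarrow> nat \<Rightarrow> (nat \<Rightarrow> 'a expert \<Rightarrow> real) \<times> (nat \<Rightarrow> real)" where
  "usc_state E f g G D xbar 0 = ((\<lambda>_ _. 0), (\<lambda>_. 0))"
| "usc_state E f g G D xbar (Suc t) =
     (let (L, l) = usc_state E f g G D xbar t;
          r = Suc t;
          x = usc_point E f L l r;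
          Lr = (\<lambda>i. (inner (g r x) (expert_out i (hist f r) - xbar) + G * D) / (2 * G * D));
          lr = (\<Sum>i\<in>E. amlp_p E L l r i * Lr i)
      in (L(r := Lr), l(r := lr)))"

definition usc_x :: "'a::euclidean_space expert set \<Rightarrow> (nat \<Rightarrow> 'a \<Rightarrow> real) \<Rightarrow> (nat \<Rightarrow> 'a \<Rightarrow> 'a) \<Rightarrow>
    real \<Rightarrow> real \<Rightarrow> 'a \<Rightarrow> nat \<Rightarrow> 'a" where
  "usc_x E f g G D xbar t =
     (let (L, l) = usc_state E f g G D xbar (t - 1) in usc_point E f L l t)"

definition usc_Gamma :: "nat \<Rightarrow> nat \<Rightarrow> real" where
  "usc_Gamma n T = 3 * ln (real n) + ln (1 + real n / (2 * exp 1) * (1 + ln (real T + 1)))"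

definition usc_beta :: "real \<Rightarrow> real \<Rightarrow> real \<Rightarrow> real" where
  "usc_beta G D \<alpha> = 1/2 * min (1 / (4 * G * D)) \<alpha>"

definition usc_add :: "nat \<Rightarrow> nat \<Rightarrow> real \<Rightarrow> real \<Rightarrow> real \<Rightarrow> real" where
  "usc_add n T G D \<alpha> =
     2 * usc_Gamma n T * G * D * (2 + 1 / sqrt (ln (real n)))
     + (usc_Gamma n T)^2 / (2 * usc_beta G D \<alpha> * ln (real n))"

end

theory Submission
  imports Defs
begin

lemma ln_lower_half:
  fixes x :: real assumes "-(1/2) \<le> x" "x \<le> 1/2"
  shows "x - x^2 \<le> ln (1 + x)"
proof (cases "0 \<le> x")
  case True
  then show ?thesis using ln_one_plus_pos_lower_bound[of x] assms by simp
next
  case False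
  let ?g = "\<lambda>y::real. ln (1 + y) - y + y^2"
  have "?g 0 \<le> ?g x"
  proof (rule DERIV_nonpos_imp_nonincreasing[of x 0 ?g])
    show "x \<le> 0" using False by simp
    fix y :: real assume y: "x \<le> y" "y \<le> 0"
    have pos: "1 + y > 0" using y assms by simp
    have "DERIV ?g y :> (1 / (1 + y) - 1 + 2 * y)"
      using pos by (auto intro!: derivative_eq_intros simp: power2_eq_square)
    moreover have "1 / (1 + y) - 1 + 2 * y \<le> 0"
    proof -
      have "1 / (1 + y) - 1 + 2 * y = y * (1 + 2*y) / (1 + y)"
        using pos by (simp add: field_simps)
      also have "\<dots> \<le> 0"
        using y assms pos by (intro divide_nonpos_pos mult_nonpos_nonneg) auto
      finally show ?thesis .
    qed
    ultimately show "\<exists>d. DERIV ?g y :> d \<and> d \<le> 0" by blast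
  qed
  then show ?thesis by simp
qed

lemma exp_bound_ylny:
  fixes z :: real assumes "z > 0" shows "- (z * ln z) \<le> 1 / exp 1"
proof -
  obtain s where s: "z = exp s" using assms by (metis exp_ln)
  have "exp (-(s+1)) \<ge> 1 + (-(s+1))" by (rule exp_ge_add_one_self)
  hence "exp (-(s+1)) \<ge> - s" by simp
  hence "exp s * (-s) \<le> exp s * exp (-(s+1))" by (intro mult_left_mono) auto
  moreover have "exp s * exp (-(s+1)) = 1 / exp 1"
    by (simp add: mult_exp_exp exp_minus divide_inverse)
  moreover have "-(z * ln z) = exp s * (-s)" using s by simp
  ultimately show ?thesis by linarith
qed

lemma powr_le_lin:
  fixes y a :: real assumes y: "y > 0" and a: "0 < a" "a \<le> 1"
  shows "y powr a \<le> y + (1/a - 1) / exp 1"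
proof -
  define z where "z = y powr a"
  define b where "b = 1/a"
  have z: "z > 0" using y by (simp add: z_def)
  have b1: "b \<ge> 1" using a by (simp add: b_def)
  have yz: "y = z powr b" using a y by (simp add: z_def b_def powr_powr)
  have "z powr (b - 1) = exp ((b - 1) * ln z)" using z by (simp add: powr_def)
  also have "\<dots> \<ge> 1 + (b - 1) * ln z" by (rule exp_ge_add_one_self)
  finally have h1: "z powr (b - 1) \<ge> 1 + (b - 1) * ln z" .
  have "z powr b = z * z powr (b - 1)" using z by (simp add: powr_diff)
  also have "\<dots> \<ge> z * (1 + (b - 1) * ln z)" using h1 z by (simp add: mult_left_mono)
  finally have h2: "z powr b \<ge> z + (b - 1) * (z * ln z)" by (simp add: algebra_simps)
  have "(b - 1) * (- (z * ln z)) \<le> (b - 1) * (1 / exp 1)"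
    using exp_bound_ylny[OF z] b1 by (intro mult_left_mono) auto
  hence "z \<le> z powr b + (b - 1) / exp 1" using h2 by (simp add: algebra_simps)
  hence "z \<le> y + (b - 1) / exp 1" using yz by simp
  thus ?thesis unfolding z_def b_def .
qed

lemma sqrt_step3:
  fixes a A :: real assumes "0 \<le> a" "a \<le> 1" "0 \<le> A"
  shows "a / sqrt (1 + A) \<le> 3 * (sqrt (1 + (A + a)) - sqrt (1 + A))"
proof -
  define u where "u = sqrt (1 + A)"
  define v where "v = sqrt (1 + (A + a))"
  have u: "u \<ge> 1" using assms by (simp add: u_def)
  have uv: "u \<le> v" using assms by (simp add: u_def v_def)
  have "v \<le> sqrt (4 * (1 + A))" unfolding v_def using assms by (intro real_sqrt_le_mono) (simp add: algebra_simps)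
  also have "sqrt (4 * (1 + A)) = 2 * u" unfolding u_def by (subst real_sqrt_mult) simp
  finally have v2: "v \<le> 2 * u" .
  have u2: "u * u = 1 + A" using assms by (simp add: u_def)
  have v2': "v * v = 1 + (A + a)" using assms by (simp add: v_def)
  have fac: "(v - u) * (v + u) = v * v - u * u" by (simp add: algebra_simps)
  have "a / u = (v - u) * (v + u) / u" using u2 v2' fac by simp
  also have "\<dots> \<le> (v - u) * (3 * u) / u"
    using uv v2 u by (intro divide_right_mono mult_left_mono) auto
  also have "\<dots> = 3 * (v - u)" using u by simp
  finally show ?thesis by (simp add: u_def v_def)
qed

lemma ln_step:
  fixes a A :: real assumes "0 \<le> a" "a \<le> 1" "0 \<le> A"
  shows "a / (1 + A) \<le> (ln (1 + (A + a)) - ln (1 + A)) + (1 / (1 + A) - 1 / (1 + (A + a)))"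
proof -
  have p1: "1 + A > 0" "1 + (A+a) > 0" using assms by auto
  have "ln ((1 + A) / (1 + (A + a))) \<le> (1 + A) / (1 + (A + a)) - 1"
    using p1 by (intro ln_le_minus_one) simp
  hence h: "ln (1 + (A + a)) - ln (1 + A) \<ge> a / (1 + (A + a))"
    using p1 by (simp add: ln_div field_simps)
  have e1: "a / (1 + A) - a / (1 + (A + a)) = a * a / ((1 + A) * (1 + (A + a)))"
    using p1 by (simp add: field_simps)
  have e2: "1 / (1 + A) - 1 / (1 + (A + a)) = a / ((1 + A) * (1 + (A + a)))"
    using p1 by (simp add: field_simps)
  have "a * a \<le> a" using assms by (simp add: mult_le_one mult_left_le)
  hence "a * a / ((1 + A) * (1 + (A + a))) \<le> a / ((1 + A) * (1 + (A + a)))"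
    using p1 by (intro divide_right_mono) auto
  hence "a / (1 + A) \<le> a / (1 + (A + a)) + (1 / (1 + A) - 1 / (1 + (A + a)))"
    using e1 e2 by linarith
  thus ?thesis using h by linarith
qed

lemma sqrt_one_plus_le: "0 \<le> (x::real) \<Longrightarrow> sqrt (1 + x) \<le> 1 + x / 2"
  by (rule real_le_lsqrt) (auto simp: power2_eq_square algebra_simps)

lemma ln_ge_half: assumes "(x::real) \<ge> 2" shows "ln x \<ge> 1/2"
proof -
  have "ln (1/x) \<le> 1/x - 1" using assms by (intro ln_le_minus_one) simp
  hence "ln x \<ge> 1 - 1/x" using assms by (simp add: ln_div)
  moreover have "1/x \<le> 1/2" using assms by simp
  ultimately show ?thesis by linarith
qed

lemma half_aux: "(z::real) \<le> x' - x + (y - y') \<Longrightarrow> (x + (1 - y))/2 + z/2 \<le> (x' + (1 - y'))/2"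
  by (simp add: field_simps)

lemma div_div_cancel: "(c::real) \<noteq> 0 \<Longrightarrow> x \<noteq> 0 \<Longrightarrow> y \<noteq> 0 \<Longrightarrow> (c / x) / (c / y) = y / x"
  by (simp add: field_simps)

lemma fin_arith:
  fixes s c B X :: real assumes s: "s > 0" and c: "s * s = c" "c \<ge> 0"
  shows "B * (2 + X / s) + 2 * c + s * (3 * X - 3) \<le> (3 * c + B) / s * X + 2 * (3 * c + B)"
proof -
  have 1: "(3 * c + B) / s * X = 3 * (s * X) + B * X / s"
    using s unfolding c(1)[symmetric] by (simp add: field_simps)
  have 2: "B * (2 + X / s) = 2 * B + B * X / s" by (simp add: algebra_simps)
  have 3: "s * (3 * X - 3) = 3 * (s * X) - 3 * s" by (simp add: algebra_simps)
  have 4: "\<And>P Q. 2 * B + P + 2 * c + (3 * Q - 3 * s) \<le> 3 * Q + P + 2 * (3 * c + B)"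
    using s c(2) by argo
  show ?thesis unfolding 1 2 3 by (rule 4)
qed

context
  fixes E :: "'e set" and L :: "nat \<Rightarrow> 'e \<Rightarrow> real" and l :: "nat \<Rightarrow> real" and T :: nat
  assumes finE: "finite E" and cardE: "card E \<ge> 2"
    and Lr: "\<And>t i. t \<in> {1..T} \<Longrightarrow> i \<in> E \<Longrightarrow> 0 \<le> L t i \<and> L t i \<le> 1"
    and lmix: "\<And>t. t \<in> {1..T} \<Longrightarrow> l t = (\<Sum>i\<in>E. amlp_p E L l t i * L t i)"
begin

abbreviation "nE \<equiv> card E"
abbreviation "cc \<equiv> ln (real (card E))"
abbreviation "eta \<equiv> amlp_eta (card E) L l"
abbreviation "ww \<equiv> amlp_w (card E) L l"
abbreviation "SS t i \<equiv> (\<Sum>s=1..t. (l s - L s i)^2)"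

lemma cc_ge: "cc \<ge> 1/2"
  using cardE by (intro ln_ge_half) simp

lemma SS_nonneg: "SS t i \<ge> 0"
  by (intro sum_nonneg) simp

lemma eta_eq: "eta t i = min (1/2) (sqrt (cc / (1 + SS t i)))"
  by (simp add: amlp_eta_def)

lemma eta_pos: "eta t i > 0"
proof -
  have "cc / (1 + SS t i) > 0" using cc_ge SS_nonneg[where t=t and i=i] by (intro divide_pos_pos) auto
  thus ?thesis by (simp add: eta_eq)
qed

lemma eta_le: "eta t i \<le> 1/2"
  by (simp add: eta_eq)

lemma SS_Suc: "SS (Suc t) i = SS t i + (l (Suc t) - L (Suc t) i)^2"
  by (simp add: sum.nat_ivl_Suc')

lemma eta_mono: "eta (Suc t) i \<le> eta t i"
proof -
  have "1 + SS t i \<le> 1 + SS (Suc t) i" using SS_Suc[where t=t and i=i] by simp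
  moreover have "0 < 1 + SS t i" using SS_nonneg[where t=t and i=i] by linarith
  moreover have "0 < 1 + SS (Suc t) i" using SS_nonneg[where t="Suc t" and i=i] by linarith
  ultimately have "cc / (1 + SS (Suc t) i) \<le> cc / (1 + SS t i)"
    using cc_ge by (intro divide_left_mono mult_pos_pos) auto
  hence "sqrt (cc / (1 + SS (Suc t) i)) \<le> sqrt (cc / (1 + SS t i))" by simp
  thus ?thesis by (simp add: eta_eq min_le_iff_disj)
qed

lemma p_props:
  assumes t: "t \<in> {1..T}" and w: "\<forall>i\<in>E. 0 < ww (t - 1) i"
  shows "(\<forall>i\<in>E. 0 \<le> amlp_p E L l t i) \<and> (\<Sum>i\<in>E. amlp_p E L l t i) = 1"
proof -
  let ?Z = "\<Sum>j\<in>E. eta (t - 1) j * ww (t - 1) j"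
  have Ene: "E \<noteq> {}" using cardE by auto
  have Z: "?Z > 0" using finE Ene w eta_pos by (intro sum_pos) auto
  have "\<forall>i\<in>E. 0 \<le> amlp_p E L l t i"
    using Z w eta_pos by (auto simp: amlp_p_def intro!: divide_nonneg_pos mult_nonneg_nonneg less_imp_le)
  moreover have "(\<Sum>i\<in>E. amlp_p E L l t i) = ?Z / ?Z"
    unfolding amlp_p_def by (rule sum_divide_distrib[symmetric])
  ultimately show ?thesis using Z by simp
qed

lemma l_range:
  assumes t: "t \<in> {1..T}" and w: "\<forall>i\<in>E. 0 < ww (t - 1) i"
  shows "0 \<le> l t \<and> l t \<le> 1"
proof -
  note pp = p_props[OF t w]
  have "0 \<le> (\<Sum>i\<in>E. amlp_p E L l t i * L t i)"
    using pp Lr[OF t] by (intro sum_nonneg mult_nonneg_nonneg) auto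
  moreover have "(\<Sum>i\<in>E. amlp_p E L l t i * L t i) \<le> (\<Sum>i\<in>E. amlp_p E L l t i * 1)"
    using pp Lr[OF t] by (intro sum_mono mult_left_mono) auto
  ultimately show ?thesis using pp lmix[OF t] by simp
qed

lemma w_pos_aux: "t \<le> T \<Longrightarrow> (\<forall>i\<in>E. 0 < ww t i)"
proof (induction t)
  case 0
  then show ?case using cardE by simp
next
  case (Suc t)
  hence w: "\<forall>i\<in>E. 0 < ww t i" by simp
  have t: "Suc t \<in> {1..T}" using Suc by simp
  have lr: "0 \<le> l (Suc t) \<and> l (Suc t) \<le> 1" using l_range[OF t] w by simp
  show ?case
  proof
    fix i assume i: "i \<in> E"
    have Li: "0 \<le> L (Suc t) i \<and> L (Suc t) i \<le> 1" using Lr[OF t i] .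
    have "\<bar>eta t i * (l (Suc t) - L (Suc t) i)\<bar> \<le> 1/2 * 1"
      unfolding abs_mult using eta_le[of t i] eta_pos[of t i] lr Li
      by (intro mult_mono) auto
    hence b: "1 + eta t i * (l (Suc t) - L (Suc t) i) > 0" by linarith
    have "ww t i > 0" using w i by simp
    thus "0 < ww (Suc t) i" using b by simp
  qed
qed

lemma w_pos: "t \<le> T \<Longrightarrow> i \<in> E \<Longrightarrow> 0 < ww t i"
  using w_pos_aux by blast

lemma r_bound: "t \<in> {1..T} \<Longrightarrow> i \<in> E \<Longrightarrow> \<bar>l t - L t i\<bar> \<le> 1"
  using l_range[of t] w_pos[of "t - 1"] Lr[of t i] by fastforce

lemma p_props': "t \<in> {1..T} \<Longrightarrow> (\<forall>i\<in>E. 0 \<le> amlp_p E L l t i) \<and> (\<Sum>i\<in>E. amlp_p E L l t i) = 1"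
  using p_props[of t] w_pos[of "t - 1"] by fastforce

lemma zero_sum:
  assumes t: "t \<in> {1..T}"
  shows "(\<Sum>i\<in>E. eta (t - 1) i * ww (t - 1) i * (l t - L t i)) = 0"
proof -
  let ?Z = "\<Sum>j\<in>E. eta (t - 1) j * ww (t - 1) j"
  have Ene: "E \<noteq> {}" using cardE by auto
  have Z: "?Z > 0" using finE Ene w_pos[of "t - 1"] t eta_pos by (intro sum_pos) auto
  have "(\<Sum>i\<in>E. eta (t - 1) i * ww (t - 1) i * L t i) = ?Z * (\<Sum>i\<in>E. amlp_p E L l t i * L t i)"
    unfolding amlp_p_def sum_distrib_left using Z by (intro sum.cong) auto
  also have "\<dots> = ?Z * l t" using lmix[OF t] by simp
  finally have h: "(\<Sum>i\<in>E. eta (t - 1) i * ww (t - 1) i * L t i) = ?Z * l t" .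
  have "(\<Sum>i\<in>E. eta (t - 1) i * ww (t - 1) i * (l t - L t i))
     = (\<Sum>i\<in>E. eta (t - 1) i * ww (t - 1) i * l t) - (\<Sum>i\<in>E. eta (t - 1) i * ww (t - 1) i * L t i)"
    by (simp add: sum_subtractf right_diff_distrib)
  also have "(\<Sum>i\<in>E. eta (t - 1) i * ww (t - 1) i * l t) = ?Z * l t"
    by (rule sum_distrib_right[symmetric])
  finally
  show ?thesis using h by simp
qed


abbreviation "WW t \<equiv> (\<Sum>i\<in>E. ww t i)"

lemma W_step:
  assumes t: "Suc t \<le> T"
  shows "WW (Suc t) \<le> WW t + (\<Sum>i\<in>E. (eta t i / eta (Suc t) i - 1) / exp 1)"
proof -
  have t1: "Suc t \<in> {1..T}" using t by simp
  define v where "v i = ww t i * (1 + eta t i * (l (Suc t) - L (Suc t) i))" for i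
  have vpos: "v i > 0" if i: "i \<in> E" for i
  proof -
    have "\<bar>eta t i * (l (Suc t) - L (Suc t) i)\<bar> \<le> 1/2 * 1"
      unfolding abs_mult using eta_le[of t i] eta_pos[of t i] r_bound[OF t1 i]
      by (intro mult_mono) auto
    hence b: "1 + eta t i * (l (Suc t) - L (Suc t) i) > 0" by linarith
    have "ww t i > 0" using w_pos[of t i] t i by simp
    thus ?thesis using b by (simp add: v_def)
  qed
  have each: "ww (Suc t) i \<le> v i + (eta t i / eta (Suc t) i - 1) / exp 1" if i: "i \<in> E" for i
  proof -
    have a0: "0 < eta (Suc t) i / eta t i" using eta_pos[of "Suc t" i] eta_pos[of t i] by simp
    have a1: "eta (Suc t) i / eta t i \<le> 1" using eta_pos[of t i] eta_mono[of t i] by simp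
    have "ww (Suc t) i = v i powr (eta (Suc t) i / eta t i)" by (simp add: v_def)
    also have "\<dots> \<le> v i + (1 / (eta (Suc t) i / eta t i) - 1) / exp 1"
      by (rule powr_le_lin[OF vpos[OF i] a0 a1])
    also have "1 / (eta (Suc t) i / eta t i) = eta t i / eta (Suc t) i" by simp
    finally show ?thesis .
  qed
  have "WW (Suc t) \<le> (\<Sum>i\<in>E. v i + (eta t i / eta (Suc t) i - 1) / exp 1)"
    using each by (intro sum_mono) auto
  also have "\<dots> = (\<Sum>i\<in>E. v i) + (\<Sum>i\<in>E. (eta t i / eta (Suc t) i - 1) / exp 1)"
    by (rule sum.distrib)
  also have "(\<Sum>i\<in>E. v i) = (\<Sum>i\<in>E. ww t i + eta t i * ww t i * (l (Suc t) - L (Suc t) i))"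
    by (intro sum.cong) (auto simp: v_def algebra_simps)
  also have "\<dots> = WW t + (\<Sum>i\<in>E. eta t i * ww t i * (l (Suc t) - L (Suc t) i))"
    by (rule sum.distrib)
  also have "(\<Sum>i\<in>E. eta t i * ww t i * (l (Suc t) - L (Suc t) i)) = 0"
    using zero_sum[OF t1] by simp
  finally show ?thesis by simp
qed

lemma W_bound_aux:
  "t \<le> T \<Longrightarrow> WW t \<le> 1 + (\<Sum>s=1..t. \<Sum>i\<in>E. (eta (s - 1) i / eta s i - 1) / exp 1)"
proof (induction t)
  case 0
  have "WW 0 = real (card E) * (1 / real (card E))" by simp
  also have "\<dots> = 1" using cardE by simp
  finally show ?case by simp
next
  case (Suc t)
  have "WW (Suc t) \<le> WW t + (\<Sum>i\<in>E. (eta t i / eta (Suc t) i - 1) / exp 1)"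
    using W_step Suc.prems by blast
  also have "\<dots> \<le> 1 + (\<Sum>s=1..t. \<Sum>i\<in>E. (eta (s - 1) i / eta s i - 1) / exp 1)
        + (\<Sum>i\<in>E. (eta t i / eta (Suc t) i - 1) / exp 1)"
    using Suc by simp
  also have "\<dots> = 1 + (\<Sum>s=1..Suc t. \<Sum>i\<in>E. (eta (s - 1) i / eta s i - 1) / exp 1)"
    by (simp add: sum.nat_ivl_Suc')
  finally show ?case .
qed

lemma ratio_step:
  "eta t i / eta (Suc t) i - 1 \<le> ((l (Suc t) - L (Suc t) i)^2 / (1 + SS t i)) / 2"
proof -
  define a where "a = (l (Suc t) - L (Suc t) i)^2"
  define S where "S = SS t i"
  have S0: "S \<ge> 0" using SS_nonneg[where t=t and i=i] by (simp add: S_def)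
  have a0: "a \<ge> 0" by (simp add: a_def)
  have S': "SS (Suc t) i = S + a" by (simp add: SS_Suc S_def a_def)
  have pS: "1 + S > 0" "1 + (S + a) > 0" using S0 a0 by auto
  have e1: "eta t i = min (1/2) (sqrt (cc / (1 + S)))" unfolding S_def by (rule eta_eq)
  have e2: "eta (Suc t) i = min (1/2) (sqrt (cc / (1 + (S + a))))" unfolding S'[symmetric] by (rule eta_eq)
  have ep: "eta (Suc t) i > 0" by (rule eta_pos)
  have key: "eta t i / eta (Suc t) i \<le> sqrt ((1 + (S + a)) / (1 + S))"
  proof (cases "eta (Suc t) i = 1/2")
    case True
    have "eta t i / eta (Suc t) i \<le> 1" using eta_le[of t i] True ep by simp
    also have "1 \<le> sqrt ((1 + (S + a)) / (1 + S))" using pS a0 by simp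
    finally show ?thesis .
  next
    case False
    hence e2': "eta (Suc t) i = sqrt (cc / (1 + (S + a)))" using e2 by (auto simp: min_def split: if_splits)
    have "eta t i \<le> sqrt (cc / (1 + S))" using e1 by simp
    hence "eta t i / eta (Suc t) i \<le> sqrt (cc / (1 + S)) / sqrt (cc / (1 + (S + a)))"
      using ep unfolding e2' by (intro divide_right_mono) auto
    also have "\<dots> = sqrt ((cc / (1 + S)) / (cc / (1 + (S + a))))" by (simp add: real_sqrt_divide)
    also have "(cc / (1 + S)) / (cc / (1 + (S + a))) = (1 + (S + a)) / (1 + S)"
    proof -
      have "cc > 0" using cc_ge by linarith
      thus ?thesis using pS by (intro div_div_cancel) auto
    qed
    finally show ?thesis .
  qed
  also have "(1 + (S + a)) / (1 + S) = 1 + a / (1 + S)" using pS by (simp add: field_simps)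
  also have "sqrt (1 + a / (1 + S)) \<le> 1 + (a / (1 + S)) / 2"
    using a0 pS by (intro sqrt_one_plus_le) simp
  finally show ?thesis by (simp add: a_def S_def)
qed

lemma ratio_sum:
  "t \<le> T \<Longrightarrow> i \<in> E \<Longrightarrow> (\<Sum>s=1..t. eta (s - 1) i / eta s i - 1)
      \<le> (ln (1 + SS t i) + (1 - 1 / (1 + SS t i))) / 2"
proof (induction t)
  case 0
  then show ?case by simp
next
  case (Suc t)
  define a where "a = (l (Suc t) - L (Suc t) i)^2"
  define S where "S = SS t i"
  have S0: "S \<ge> 0" using SS_nonneg[where t=t and i=i] by (simp add: S_def)
  have a0: "a \<ge> 0" by (simp add: a_def)
  have a1: "a \<le> 1"
  proof -
    have "\<bar>l (Suc t) - L (Suc t) i\<bar> \<le> 1" using r_bound[of "Suc t" i] Suc.prems by simp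
    hence "\<bar>l (Suc t) - L (Suc t) i\<bar>^2 \<le> 1^2" by (intro power_mono) auto
    thus ?thesis by (simp add: a_def)
  qed
  have S': "SS (Suc t) i = S + a" by (simp add: SS_Suc S_def a_def)
  have "(\<Sum>s=1..Suc t. eta (s - 1) i / eta s i - 1)
      = (\<Sum>s=1..t. eta (s - 1) i / eta s i - 1) + (eta t i / eta (Suc t) i - 1)"
    by (simp add: sum.nat_ivl_Suc')
  also have "\<dots> \<le> (ln (1 + S) + (1 - 1 / (1 + S))) / 2 + (a / (1 + S)) / 2"
  proof -
    have IH: "(\<Sum>s=1..t. eta (s - 1) i / eta s i - 1) \<le> (ln (1 + S) + (1 - 1 / (1 + S))) / 2"
      using Suc.IH Suc.prems unfolding S_def by simp
    have rs: "eta t i / eta (Suc t) i - 1 \<le> (a / (1 + S)) / 2"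
      using ratio_step[of t i] unfolding a_def S_def .
    show ?thesis using IH rs by linarith
  qed
  also have "\<dots> \<le> (ln (1 + (S + a)) + (1 - 1 / (1 + (S + a)))) / 2"
    by (rule half_aux[OF ln_step[OF a0 a1 S0]])
  finally show ?case unfolding S' .
qed

lemma SS_le: "t \<le> T \<Longrightarrow> i \<in> E \<Longrightarrow> SS t i \<le> real t"
proof -
  assume t: "t \<le> T" and i: "i \<in> E"
  have "SS t i \<le> (\<Sum>s=1..t. 1)"
  proof (intro sum_mono)
    fix s assume s: "s \<in> {1..t}"
    have "\<bar>l s - L s i\<bar> \<le> 1" using r_bound[of s i] s t i by simp
    hence "\<bar>l s - L s i\<bar>^2 \<le> 1^2" by (intro power_mono) auto
    thus "(l s - L s i)^2 \<le> 1" by simp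
  qed
  thus ?thesis by simp
qed

lemma W_final:
  "WW T \<le> 1 + real (card E) / (2 * exp 1) * (1 + ln (real T + 1))"
proof -
  have "WW T \<le> 1 + (\<Sum>s=1..T. \<Sum>i\<in>E. (eta (s - 1) i / eta s i - 1) / exp 1)"
    using W_bound_aux by simp
  also have "(\<Sum>s=1..T. \<Sum>i\<in>E. (eta (s - 1) i / eta s i - 1) / exp 1)
      = (\<Sum>i\<in>E. (\<Sum>s=1..T. eta (s - 1) i / eta s i - 1) / exp 1)"
    by (subst sum.swap) (simp add: sum_divide_distrib)
  also have "\<dots> \<le> (\<Sum>i\<in>E. ((1 + ln (real T + 1)) / 2) / exp 1)"
  proof (intro sum_mono divide_right_mono)
    fix i assume i: "i \<in> E"
    have S0: "SS T i \<ge> 0" by (rule SS_nonneg)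
    have "(\<Sum>s=1..T. eta (s - 1) i / eta s i - 1) \<le> (ln (1 + SS T i) + (1 - 1 / (1 + SS T i))) / 2"
      using ratio_sum[of T i] i by simp
    also have "ln (1 + SS T i) \<le> ln (real T + 1)"
      using SS_le[of T i] i S0 by simp
    also have "1 - 1 / (1 + SS T i) \<le> 1" using S0 by simp
    finally show "(\<Sum>s=1..T. eta (s - 1) i / eta s i - 1) \<le> (1 + ln (real T + 1)) / 2" by simp
  qed simp
  also have "\<dots> = real (card E) / (2 * exp 1) * (1 + ln (real T + 1))" by simp
  finally show ?thesis by simp
qed


lemma lower:
  "t \<le> T \<Longrightarrow> i \<in> E \<Longrightarrow> ln (ww t i) / eta t i \<ge> - cc / eta 0 i
     + (\<Sum>s=1..t. (l s - L s i) - eta (s - 1) i * (l s - L s i)^2)"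
proof (induction t)
  case 0
  have "ln (ww 0 i) = - cc" using cardE by (simp add: ln_div)
  then show ?case by simp
next
  case (Suc t)
  hence i: "i \<in> E" and t1: "Suc t \<in> {1..T}" by auto
  define r where "r = l (Suc t) - L (Suc t) i"
  define e where "e = eta t i"
  define e' where "e' = eta (Suc t) i"
  have ep: "e > 0" "e' > 0" by (simp_all add: e_def e'_def eta_pos)
  have rb: "\<bar>r\<bar> \<le> 1" using r_bound[OF t1 i] by (simp add: r_def)
  have "\<bar>e * r\<bar> \<le> 1/2 * 1"
    unfolding abs_mult using eta_le[of t i] ep rb by (intro mult_mono) (auto simp: e_def)
  hence er: "-(1/2) \<le> e * r" "e * r \<le> 1/2" by linarith+
  have b: "1 + e * r > 0" using er by linarith
  have wp: "ww t i > 0" using w_pos[of t i] Suc.prems by simp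
  define W1 where "W1 = ww (Suc t) i"
  define W0 where "W0 = ww t i"
  have "W1 = (W0 * (1 + e * r)) powr (e' / e)" by (simp add: W1_def W0_def r_def e_def e'_def)
  hence "ln W1 = (e' / e) * ln (W0 * (1 + e * r))" by simp
  also have "ln (W0 * (1 + e * r)) = ln W0 + ln (1 + e * r)" using wp b by (simp add: ln_mult W0_def)
  finally have "ln W1 / e' = ln W0 / e + ln (1 + e * r) / e"
    using ep by (simp add: field_simps)
  hence "ln (ww (Suc t) i) / e' = ln (ww t i) / e + ln (1 + e * r) / e"
    by (simp only: W1_def W0_def)
  moreover have "ln (1 + e * r) / e \<ge> (e * r - (e * r)^2) / e"
    using ln_lower_half[OF er] ep by (intro divide_right_mono) auto
  moreover have "(e * r - (e * r)^2) / e = r - e * r^2"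
    using ep by (simp add: field_simps power2_eq_square)
  moreover have "ln (ww t i) / e \<ge> - cc / eta 0 i
     + (\<Sum>s=1..t. (l s - L s i) - eta (s - 1) i * (l s - L s i)^2)"
    using Suc by (simp add: e_def)
  moreover have "(\<Sum>s=1..Suc t. (l s - L s i) - eta (s - 1) i * (l s - L s i)^2)
      = (\<Sum>s=1..t. (l s - L s i) - eta (s - 1) i * (l s - L s i)^2) + (r - e * r^2)"
    by (simp add: sum.nat_ivl_Suc' r_def e_def)
  ultimately show ?case by (simp add: e'_def)
qed

lemma sum_eta_sq:
  "t \<le> T \<Longrightarrow> i \<in> E \<Longrightarrow> (\<Sum>s=1..t. eta (s - 1) i * (l s - L s i)^2) \<le> sqrt cc * (3 * sqrt (1 + SS t i) - 3)"
proof (induction t)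
  case 0
  then show ?case by simp
next
  case (Suc t)
  hence i: "i \<in> E" and t1: "Suc t \<in> {1..T}" by auto
  define a where "a = (l (Suc t) - L (Suc t) i)^2"
  define S where "S = SS t i"
  have S0: "S \<ge> 0" using SS_nonneg[where t=t and i=i] by (simp add: S_def)
  have a0: "a \<ge> 0" by (simp add: a_def)
  have a1: "a \<le> 1"
  proof -
    have "\<bar>l (Suc t) - L (Suc t) i\<bar> \<le> 1" using r_bound[OF t1 i] by simp
    hence "\<bar>l (Suc t) - L (Suc t) i\<bar>^2 \<le> 1^2" by (intro power_mono) auto
    thus ?thesis by (simp add: a_def)
  qed
  have S': "SS (Suc t) i = S + a" by (simp add: SS_Suc S_def a_def)
  have "eta t i \<le> sqrt (cc / (1 + S))" by (simp add: eta_eq S_def)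
  hence "eta t i * a \<le> sqrt (cc / (1 + S)) * a" using a0 by (intro mult_right_mono) auto
  also have "sqrt (cc / (1 + S)) * a = sqrt cc * (a / sqrt (1 + S))"
    by (simp add: real_sqrt_divide)
  also have "\<dots> \<le> sqrt cc * (3 * (sqrt (1 + (S + a)) - sqrt (1 + S)))"
    using sqrt_step3[OF a0 a1 S0] cc_ge by (intro mult_left_mono) auto
  finally have step: "eta t i * a \<le> sqrt cc * (3 * (sqrt (1 + (S + a)) - sqrt (1 + S)))" .
  have IH: "(\<Sum>s=1..t. eta (s - 1) i * (l s - L s i)^2) \<le> sqrt cc * (3 * sqrt (1 + S) - 3)"
    using Suc.IH Suc.prems unfolding S_def by simp
  have "(\<Sum>s=1..Suc t. eta (s - 1) i * (l s - L s i)^2)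
      = (\<Sum>s=1..t. eta (s - 1) i * (l s - L s i)^2) + eta t i * a"
    by (simp add: sum.nat_ivl_Suc' a_def)
  also have "\<dots> \<le> sqrt cc * (3 * sqrt (1 + S) - 3) + sqrt cc * (3 * (sqrt (1 + (S + a)) - sqrt (1 + S)))"
    using IH step by linarith
  also have "\<dots> = sqrt cc * (3 * sqrt (1 + (S + a)) - 3)" by (simp add: algebra_simps)
  finally show ?case unfolding S' .
qed

lemma amlp_regret:
  assumes k: "k \<in> E"
  shows "(\<Sum>t=1..T. l t - L t k)
     \<le> usc_Gamma (card E) T / sqrt cc * sqrt (1 + SS T k) + 2 * usc_Gamma (card E) T"
proof -
  define B where "B = ln (1 + real (card E) / (2 * exp 1) * (1 + ln (real T + 1)))"
  define X where "X = sqrt (1 + SS T k)"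
  have G: "usc_Gamma (card E) T = 3 * cc + B" by (simp add: usc_Gamma_def B_def)
  have c: "cc \<ge> 1/2" by (rule cc_ge)
  have sc: "sqrt cc > 0" using c by simp
  have X0: "X \<ge> 0" using SS_nonneg[where t=T and i=k] by (simp add: X_def)
  have lnT: "ln (real T + 1) \<ge> 0" by simp
  have B0: "B \<ge> 0" unfolding B_def using lnT by (intro ln_ge_zero) simp
  have eT: "eta T k > 0" by (rule eta_pos)
  have low: "ln (ww T k) / eta T k \<ge> - cc / eta 0 k
     + (\<Sum>s=1..T. (l s - L s k) - eta (s - 1) k * (l s - L s k)^2)"
    using lower[of T k] k by simp
  have e0: "eta 0 k \<ge> 1/2"
  proof -
    have "sqrt (1/4) \<le> sqrt cc" using c by (intro real_sqrt_le_mono) simp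
    moreover have "sqrt (1/4::real) = 1/2" by (simp add: real_sqrt_divide)
    ultimately show ?thesis by (simp add: eta_eq)
  qed
  have c0: "cc / eta 0 k \<le> 2 * cc"
  proof -
    have "cc / eta 0 k \<le> cc / (1/2)" using e0 c by (intro divide_left_mono) auto
    thus ?thesis by simp
  qed
  have wW: "ww T k \<le> WW T"
    using finE k w_pos[of T] by (intro member_le_sum) (auto intro: less_imp_le)
  have wB: "ln (ww T k) \<le> B"
  proof -
    have "ln (ww T k) \<le> ln (WW T)" using wW w_pos[of T k] k by simp
    also have "\<dots> \<le> B" unfolding B_def using W_final w_pos[of T k] k wW by simp
    finally show ?thesis .
  qed
  have inv_eta: "1 / eta T k \<le> 2 + X / sqrt cc"
  proof (cases "eta T k = 1/2")
    case True
    have "X / sqrt cc \<ge> 0" using X0 sc by simp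
    moreover have "1 / eta T k = 2" by (subst True) simp
    ultimately show ?thesis by linarith
  next
    case False
    hence "eta T k = sqrt (cc / (1 + SS T k))" by (auto simp: eta_eq min_def split: if_splits)
    hence "1 / eta T k = X / sqrt cc" by (simp add: X_def real_sqrt_divide)
    then show ?thesis by simp
  qed
  have "ln (ww T k) / eta T k \<le> B / eta T k" using wB eT by (intro divide_right_mono) auto
  also have "B / eta T k = B * (1 / eta T k)" by simp
  also have "\<dots> \<le> B * (2 + X / sqrt cc)" using inv_eta B0 by (intro mult_left_mono) auto
  finally have t1: "ln (ww T k) / eta T k \<le> B * (2 + X / sqrt cc)" .
  have t2: "(\<Sum>s=1..T. eta (s - 1) k * (l s - L s k)^2) \<le> sqrt cc * (3 * X - 3)"
    using sum_eta_sq[of T k] k by (simp add: X_def)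
  have split: "(\<Sum>s=1..T. (l s - L s k) - eta (s - 1) k * (l s - L s k)^2)
      = (\<Sum>t=1..T. l t - L t k) - (\<Sum>s=1..T. eta (s - 1) k * (l s - L s k)^2)"
    by (simp add: sum_subtractf)
  have main: "(\<Sum>t=1..T. l t - L t k) \<le> B * (2 + X / sqrt cc) + 2 * cc + sqrt cc * (3 * X - 3)"
    using low t1 t2 c0 split by linarith
  have "B * (2 + X / sqrt cc) + 2 * cc + sqrt cc * (3 * X - 3)
      \<le> (3 * cc + B) / sqrt cc * X + 2 * (3 * cc + B)"
    by (rule fin_arith[OF sc]) (use c in simp_all)
  thus ?thesis using main G X_def by simp
qed

end

lemma exp_concave_mono:
  assumes ec: "exp_concave_on al X f" and a: "0 < a" "a \<le> al"
  shows "exp_concave_on a X f"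
proof -
  have al: "al > 0" using a by simp
  define p where "p = a / al"
  have p: "0 < p" "p \<le> 1" using a al by (auto simp: p_def)
  have pw: "exp (- a * f z) = exp (- al * f z) powr p" for z
    using al by (simp add: powr_def p_def field_simps)
  have c: "concave_on X (\<lambda>x. exp (- al * f x))" using ec by (simp add: exp_concave_on_def)
  hence cX: "convex X" by (simp add: concave_on_iff)
  show ?thesis unfolding exp_concave_on_def concave_on_iff
  proof (intro conjI cX ballI allI impI)
    fix x y and u v :: real assume xy: "x \<in> X" "y \<in> X" and uv: "0 \<le> u" "0 \<le> v" "u + v = 1"
    define ex where "ex = exp (- al * f x)"
    define ey where "ey = exp (- al * f y)"
    define ez where "ez = exp (- al * f (u *\<^sub>R x + v *\<^sub>R y))"
    have pos: "ex > 0" "ey > 0" "ez > 0" by (simp_all add: ex_def ey_def ez_def)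
    have m_le: "u * ex + v * ey \<le> ez"
      using c xy uv unfolding concave_on_iff ex_def ey_def ez_def by blast
    define m where "m = u * ex + v * ey"
    have m: "m > 0"
    proof (cases "u = 0")
      case True then show ?thesis using uv pos by (simp add: m_def)
    next
      case False then show ?thesis using uv pos
        by (simp add: m_def add_pos_nonneg)
    qed
    have young: "q powr p \<le> m powr p * (p * q / m + (1 - p))" if q: "q > 0" for q
    proof -
      have "(q / m) powr p * 1 powr (1 - p) \<le> p * (q / m) + (1 - p) * 1"
        using p q m by (intro Youngs_inequality_0) auto
      hence "(q / m) powr p \<le> p * q / m + (1 - p)" by simp
      hence "m powr p * (q / m) powr p \<le> m powr p * (p * q / m + (1 - p))"
        by (intro mult_left_mono) auto
      moreover have "m powr p * (q / m) powr p = q powr p"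
        using q m by (simp add: powr_divide)
      ultimately show ?thesis by simp
    qed
    have "u * ex powr p + v * ey powr p
        \<le> u * (m powr p * (p * ex / m + (1 - p))) + v * (m powr p * (p * ey / m + (1 - p)))"
      using young[OF pos(1)] young[OF pos(2)] uv by (intro add_mono mult_left_mono) auto
    also have "\<dots> = m powr p * (p * (u * ex + v * ey) / m + (u + v) * (1 - p))"
      by (simp add: algebra_simps add_divide_distrib)
    also have "\<dots> = m powr p" using m uv by (simp add: m_def)
    also have "\<dots> \<le> ez powr p" using m m_le p by (intro powr_mono2) (auto simp: m_def)
    finally show "u * exp (- a * f x) + v * exp (- a * f y) \<le> exp (- a * f (u *\<^sub>R x + v *\<^sub>R y))"
      by (simp only: pw ex_def ey_def ez_def)
  qed
qed

lemma concave_tangent_1d: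
  fixes \<phi> :: "real \<Rightarrow> real"
  assumes c: "concave_on {0..1} \<phi>" and d: "(\<phi> has_field_derivative d) (at 0 within {0..1})"
  shows "\<phi> 1 - \<phi> 0 \<le> d"
proof -
  have F: "at (0::real) within {0..1} = at_right 0" by (rule at_within_Icc_at_right) simp
  have lim: "((\<lambda>s. (\<phi> s - \<phi> 0) / (s - 0)) \<longlongrightarrow> d) (at_right 0)"
    using d unfolding has_field_derivative_iff F .
  have ev: "eventually (\<lambda>s. \<phi> 1 - \<phi> 0 \<le> (\<phi> s - \<phi> 0) / (s - 0)) (at_right (0::real))"
    unfolding eventually_at_right[OF zero_less_one]
  proof (intro exI[of _ 1] conjI allI impI)
    fix s :: real assume s: "0 < s" "s < 1"
    have "\<phi> (s *\<^sub>R 1 + (1 - s) *\<^sub>R 0) \<ge> s * \<phi> 1 + (1 - s) * \<phi> 0"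
      using c s unfolding concave_on_iff by (metis atLeastAtMost_iff diff_ge_0_iff_ge less_imp_le zero_le_one order_refl add.commute diff_add_cancel)
    hence "\<phi> s - \<phi> 0 \<ge> s * (\<phi> 1 - \<phi> 0)" by (simp add: algebra_simps)
    thus "\<phi> 1 - \<phi> 0 \<le> (\<phi> s - \<phi> 0) / (s - 0)" using s by (simp add: field_simps)
  qed simp
  show ?thesis by (rule tendsto_lowerbound[OF lim ev]) simp
qed

lemma ln_upper_quarter:
  fixes u :: real assumes "\<bar>u\<bar> \<le> 1/4"
  shows "ln (1 - u) \<le> - u - u^2 / 4"
proof -
  let ?g = "\<lambda>y::real. - y - y^2 / 4 - ln (1 - y)"
  have der: "DERIV ?g y :> (y / 2) * (1 + y) / (1 - y)" if y: "\<bar>y\<bar> \<le> 1/4" for y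
  proof -
    have pos: "1 - y > 0" using y by simp
    have "DERIV ?g y :> (- 1 - 2 * y / 4 - (- 1 / (1 - y)))"
      using pos by (auto intro!: derivative_eq_intros simp: power2_eq_square)
    moreover have "(- 1 - 2 * y / 4 - (- 1 / (1 - y))) = (y / 2) * (1 + y) / (1 - y)"
      using pos by (simp add: field_simps)
    ultimately show ?thesis by simp
  qed
  have "?g 0 \<le> ?g u"
  proof (cases "0 \<le> u")
    case True
    show ?thesis
    proof (rule DERIV_nonneg_imp_nondecreasing[OF True])
      fix y :: real assume y: "0 \<le> y" "y \<le> u"
      hence ya: "\<bar>y\<bar> \<le> 1/4" using assms by simp
      have "(y / 2) * (1 + y) / (1 - y) \<ge> 0" using y ya by (intro divide_nonneg_nonneg mult_nonneg_nonneg) auto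
      thus "\<exists>d. DERIV ?g y :> d \<and> 0 \<le> d" using der[OF ya] by blast
    qed
  next
    case False
    show ?thesis
    proof (rule DERIV_nonpos_imp_nonincreasing[of u 0])
      show "u \<le> 0" using False by simp
      fix y :: real assume y: "u \<le> y" "y \<le> 0"
      hence ya: "\<bar>y\<bar> \<le> 1/4" using assms by simp
      have "(y / 2) * (1 + y) / (1 - y) \<le> 0" using y ya
        by (intro divide_nonpos_nonneg mult_nonpos_nonneg) auto
      thus "\<exists>d. DERIV ?g y :> d \<and> d \<le> 0" using der[OF ya] by blast
    qed
  qed
  thus ?thesis by simp
qed


lemma exp_concave_tangent:
  fixes f :: "'a::euclidean_space \<Rightarrow> real" and gf :: "'a \<Rightarrow> 'a"
  assumes X: "convex X" and ec: "exp_concave_on al X f"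
    and der: "\<And>z. z \<in> X \<Longrightarrow> (f has_derivative (\<lambda>h. inner (gf z) h)) (at z within X)"
    and x: "x \<in> X" and y: "y \<in> X" and gb: "norm (gf x) \<le> G" and dxy: "norm (x - y) \<le> D"
    and G: "G > 0" and D: "D > 0" and al: "al > 0"
  shows "f x - f y \<le> inner (gf x) (x - y) - usc_beta G D al / 2 * (inner (gf x) (x - y))^2"
proof -
  define k where "k = min (1 / (4 * G * D)) al"
  have kb: "usc_beta G D al = k / 2" by (simp add: usc_beta_def k_def)
  have k0: "k > 0" using G D al by (simp add: k_def)
  have kal: "k \<le> al" by (simp add: k_def)
  have kGD: "k * (G * D) \<le> 1/4"
  proof -
    have "k * (G * D) \<le> 1 / (4 * G * D) * (G * D)" using G D by (intro mult_right_mono) (auto simp: k_def)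
    also have "\<dots> = 1/4" using G D by simp
    finally show ?thesis .
  qed
  have ec': "concave_on X (\<lambda>z. exp (- k * f z))"
    using exp_concave_mono[OF ec k0 kal] by (simp add: exp_concave_on_def)
  define p where "p s = x + s *\<^sub>R (y - x)" for s :: real
  have pX: "p s \<in> X" if s: "s \<in> {0..1}" for s
  proof -
    have "p s = (1 - s) *\<^sub>R x + s *\<^sub>R y" by (simp add: p_def algebra_simps)
    thus ?thesis using convexD[OF X x y, of "1 - s" s] s by auto
  qed
  define \<phi> where "\<phi> s = exp (- k * f (p s))" for s
  have conc: "concave_on {0..1} \<phi>"
    unfolding concave_on_iff
  proof (intro conjI ballI allI impI)
    show "convex {0..1::real}" by simp
    fix s1 s2 :: real and u v :: real assume s: "s1 \<in> {0..1}" "s2 \<in> {0..1}" and uv: "0 \<le> u" "0 \<le> v" "u + v = 1"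
    have "p (u *\<^sub>R s1 + v *\<^sub>R s2) = u *\<^sub>R p s1 + v *\<^sub>R p s2"
    proof -
      have "x = u *\<^sub>R x + v *\<^sub>R x" using uv by (simp add: scaleR_add_left[symmetric])
      thus ?thesis by (simp add: p_def algebra_simps)
    qed
    thus "u * \<phi> s1 + v * \<phi> s2 \<le> \<phi> (u *\<^sub>R s1 + v *\<^sub>R s2)"
      using ec' pX[OF s(1)] pX[OF s(2)] uv unfolding concave_on_iff \<phi>_def by simp
  qed
  define w where "w = inner (gf x) (y - x)"
  have dp: "(p has_derivative (\<lambda>d. d *\<^sub>R (y - x))) (at 0 within {0..1})"
    unfolding p_def by (auto intro!: derivative_eq_intros)
  have p0: "p 0 = x" by (simp add: p_def)
  have p1: "p 1 = y" by (simp add: p_def)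
  have "((\<lambda>s. f (p s)) has_derivative (\<lambda>d. inner (gf (p 0)) (d *\<^sub>R (y - x)))) (at 0 within {0..1})"
    by (rule has_derivative_in_compose2[of X f "\<lambda>z h. inner (gf z) h", OF der _ _ dp])
       (use pX in auto)
  moreover have "(\<lambda>d. inner (gf (p 0)) (d *\<^sub>R (y - x))) = (*) w"
    by (auto simp: p0 w_def inner_scaleR_right)
  ultimately have df: "((\<lambda>s. f (p s)) has_field_derivative w) (at 0 within {0..1})"
    by (simp add: has_field_derivative_def)
  have "((\<lambda>s. - k * f (p s)) has_field_derivative (- k * w)) (at 0 within {0..1})"
    by (rule DERIV_cmult[OF df])
  from DERIV_chain2[OF DERIV_exp this]
  have dphi: "(\<phi> has_field_derivative exp (- k * f x) * (- k * w)) (at 0 within {0..1})"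
    unfolding \<phi>_def using p0 by simp
  have tang: "\<phi> 1 - \<phi> 0 \<le> exp (- k * f x) * (- k * w)" by (rule concave_tangent_1d[OF conc dphi])
  hence e1: "exp (- k * f y) \<le> exp (- k * f x) * (1 - k * w)"
    by (simp add: \<phi>_def p0 p1 algebra_simps)
  have wb: "\<bar>w\<bar> \<le> G * D"
  proof -
    have "\<bar>w\<bar> \<le> norm (gf x) * norm (y - x)" unfolding w_def by (rule Cauchy_Schwarz_ineq2)
    also have "\<dots> \<le> G * D" using gb dxy G by (intro mult_mono) (auto simp: norm_minus_commute)
    finally show ?thesis .
  qed
  have kw: "\<bar>k * w\<bar> \<le> 1/4"
  proof -
    have "\<bar>k * w\<bar> = k * \<bar>w\<bar>" using k0 by (simp add: abs_mult)
    also have "\<dots> \<le> k * (G * D)" using wb k0 by (intro mult_left_mono) auto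
    finally show ?thesis using kGD by linarith
  qed
  have pos1: "1 - k * w > 0" using kw by linarith
  have "- k * f y \<le> ln (exp (- k * f x) * (1 - k * w))"
    using e1 pos1 by (subst ln_ge_iff) auto
  also have "\<dots> = - k * f x + ln (1 - k * w)" using pos1 by (simp add: ln_mult)
  also have "ln (1 - k * w) \<le> - (k * w) - (k * w)^2 / 4" by (rule ln_upper_quarter[OF kw])
  finally have "- k * f y \<le> - k * f x - k * w - k * (k / 4 * w^2)"
    by (simp add: power_mult_distrib power2_eq_square algebra_simps)
  hence "k * (f x - f y) \<le> k * (- w - k / 4 * w^2)" by (simp add: algebra_simps)
  hence "f x - f y \<le> - w - k / 4 * w^2" using k0 by simp
  moreover have "inner (gf x) (x - y) = - w" by (simp add: w_def inner_diff_right)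
  ultimately show ?thesis by (simp add: kb)
qed

lemma state_Suc:
  "usc_state E f g G D xbar (Suc t) =
   (let L = fst (usc_state E f g G D xbar t); l = snd (usc_state E f g G D xbar t);
        x = usc_point E f L l (Suc t);
        Lr = (\<lambda>i. (inner (g (Suc t) x) (expert_out i (hist f (Suc t)) - xbar) + G * D) / (2 * G * D))
    in (L(Suc t := Lr), l(Suc t := (\<Sum>i\<in>E. amlp_p E L l (Suc t) i * Lr i))))"
  by (simp add: Let_def case_prod_beta)

lemma state_mono:
  assumes "t \<le> t'" "s \<le> t"
  shows "fst (usc_state E f g G D xbar t') s = fst (usc_state E f g G D xbar t) s
       \<and> snd (usc_state E f g G D xbar t') s = snd (usc_state E f g G D xbar t) s"
  using assms(1)
proof (induction t' rule: dec_induct)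
  case base
  then show ?case by simp
next
  case (step n)
  have "s \<noteq> Suc n" using step.hyps assms(2) by simp
  then show ?case using step.IH by (simp del: usc_state.simps add: state_Suc Let_def)
qed

lemma eta_cong:
  "(\<And>s. s \<le> t \<Longrightarrow> L s = L' s \<and> l s = l' s) \<Longrightarrow> amlp_eta n L l t i = amlp_eta n L' l' t i"
  unfolding amlp_eta_def by (intro arg_cong2[where f=min] refl arg_cong[where f=sqrt] arg_cong2[where f="(/)"]
     arg_cong2[where f="(+)"] sum.cong) auto

lemma w_cong:
  "(\<And>s. s \<le> t \<Longrightarrow> L s = L' s \<and> l s = l' s) \<Longrightarrow> amlp_w n L l t i = amlp_w n L' l' t i"
proof (induction t)
  case 0
  then show ?case by simp
next
  case (Suc t)
  have h: "\<And>s. s \<le> t \<Longrightarrow> L s = L' s \<and> l s = l' s" using Suc.prems by simp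
  have e1: "amlp_eta n L l t i = amlp_eta n L' l' t i" by (rule eta_cong[OF h])
  have e2: "amlp_eta n L l (Suc t) i = amlp_eta n L' l' (Suc t) i" by (rule eta_cong[OF Suc.prems])
  have "L (Suc t) = L' (Suc t) \<and> l (Suc t) = l' (Suc t)" using Suc.prems by simp
  then show ?case using Suc.IH[OF h] e1 e2 by simp
qed

lemma p_cong:
  "(\<And>s. s \<le> t - 1 \<Longrightarrow> L s = L' s \<and> l s = l' s) \<Longrightarrow> amlp_p E L l t i = amlp_p E L' l' t i"
  unfolding amlp_p_def
  by (intro arg_cong2[where f="(/)"] arg_cong2[where f="(*)"] sum.cong refl eta_cong w_cong) auto

lemma point_cong:
  "(\<And>s. s \<le> t - 1 \<Longrightarrow> L s = L' s \<and> l s = l' s) \<Longrightarrow> usc_point E f L l t = usc_point E f L' l' t"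
  unfolding usc_point_def by (intro sum.cong refl arg_cong2[where f="(*\<^sub>R)"] p_cong) auto

lemma usc_structure:
  fixes E f g G D xbar T
  defines "LF \<equiv> fst (usc_state E f g G D xbar T)" and "lF \<equiv> snd (usc_state E f g G D xbar T)"
  assumes t: "t \<in> {1..T}"
  shows "usc_x E f g G D xbar t = usc_point E f LF lF t
     \<and> LF t = (\<lambda>i. (inner (g t (usc_point E f LF lF t)) (expert_out i (hist f t) - xbar) + G * D) / (2 * G * D))
     \<and> lF t = (\<Sum>i\<in>E. amlp_p E LF lF t i * LF t i)"
proof -
  obtain m where m: "t = Suc m" using t by (cases t) auto
  define Lm where "Lm = fst (usc_state E f g G D xbar m)"
  define lm where "lm = snd (usc_state E f g G D xbar m)"
  define Lc where "Lc = fst (usc_state E f g G D xbar t)"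
  define lc where "lc = snd (usc_state E f g G D xbar t)"
  have tT: "t \<le> T" using t by simp
  have agreeT: "LF s = Lc s \<and> lF s = lc s" if "s \<le> t" for s
    using state_mono[OF tT that] by (simp add: LF_def lF_def Lc_def lc_def)
  have agree_m: "Lc s = Lm s \<and> lc s = lm s" if "s \<le> m" for s
    unfolding Lc_def lc_def Lm_def lm_def by (rule state_mono) (use that m in auto)
  have agree: "Lm s = LF s \<and> lm s = lF s" if "s \<le> t - 1" for s
    using agreeT[of s] agree_m[of s] that m by simp
  have xeq: "usc_point E f Lm lm t = usc_point E f LF lF t" by (rule point_cong[OF agree])
  have peq: "amlp_p E Lm lm t i = amlp_p E LF lF t i" for i by (rule p_cong[OF agree])
  define Lr where "Lr = (\<lambda>i. (inner (g t (usc_point E f Lm lm t)) (expert_out i (hist f t) - xbar) + G * D) / (2 * G * D))"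
  have st: "usc_state E f g G D xbar t = (Lm(t := Lr), lm(t := (\<Sum>i\<in>E. amlp_p E Lm lm t i * Lr i)))"
    unfolding m by (subst state_Suc) (simp add: Let_def Lm_def lm_def Lr_def m)
  have "usc_x E f g G D xbar t = usc_point E f Lm lm t"
    by (simp add: usc_x_def case_prod_beta Lm_def lm_def m)
  moreover have "LF t = Lr" using agreeT[of t] st by (simp add: Lc_def)
  moreover have "lF t = (\<Sum>i\<in>E. amlp_p E Lm lm t i * Lr i)" using agreeT[of t] st by (simp add: lc_def)
  ultimately show ?thesis using xeq peq by (simp add: Lr_def)
qed

lemma eta_pos_gen:
  assumes "n \<ge> 2" shows "amlp_eta n L l t i > 0"
proof -
  have "ln (real n) \<ge> 1/2" using assms by (intro ln_ge_half) simp
  moreover have "(\<Sum>s=1..t. (l s - L s i)^2) \<ge> 0" by (intro sum_nonneg) simp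
  ultimately have "ln (real n) / (1 + (\<Sum>s=1..t. (l s - L s i)^2)) > 0" by (intro divide_pos_pos) auto
  thus ?thesis by (simp add: amlp_eta_def)
qed

lemma p_generic:
  assumes fin: "finite E" and c: "card E \<ge> 2" and w: "\<forall>i\<in>E. 0 < amlp_w (card E) L l (t - 1) i"
  shows "(\<forall>i\<in>E. 0 \<le> amlp_p E L l t i) \<and> (\<Sum>i\<in>E. amlp_p E L l t i) = 1"
proof -
  let ?Z = "\<Sum>j\<in>E. amlp_eta (card E) L l (t - 1) j * amlp_w (card E) L l (t - 1) j"
  have Ene: "E \<noteq> {}" using c by auto
  have Z: "?Z > 0" using fin Ene w eta_pos_gen[OF c, where L=L and l=l and t="t - 1"] by (intro sum_pos mult_pos_pos) auto
  have "\<forall>i\<in>E. 0 \<le> amlp_p E L l t i"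
  proof
    fix i assume i: "i \<in> E"
    have "0 < amlp_eta (card E) L l (t - 1) i * amlp_w (card E) L l (t - 1) i"
      using w i eta_pos_gen[OF c, where L=L and l=l and t="t - 1"] by (intro mult_pos_pos) auto
    thus "0 \<le> amlp_p E L l t i" unfolding amlp_p_def by (rule divide_nonneg_pos[OF less_imp_le Z])
  qed
  moreover have "(\<Sum>i\<in>E. amlp_p E L l t i) = ?Z / ?Z"
    unfolding amlp_p_def by (rule sum_divide_distrib[symmetric])
  ultimately show ?thesis using Z by simp
qed

lemma final_arith:
  fixes K R S a Gam gam c :: real
  assumes K: "K > 0" and gam: "gam > 0" "gam * K \<le> 1/8" and c: "c > 0" and S: "S \<ge> 0"
    and a: "a = Gam / sqrt c" and a8: "a \<ge> 1/8"
    and R: "R \<le> a * sqrt (1 + S) + 2 * Gam"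
  shows "2 * K * R - 2 * gam * K^2 * S \<le> 2 * Gam * K * (2 + 1 / sqrt c) + Gam^2 / (2 * gam * c)"
proof -
  define Xs where "Xs = sqrt (1 + S)"
  have Xs2: "Xs^2 = 1 + S" using S by (simp add: Xs_def)
  have amgm: "2 * K * a * Xs \<le> 2 * gam * K^2 * Xs^2 + a^2 / (2 * gam)"
  proof -
    have "0 \<le> (2 * gam * K * Xs - a)^2" by simp
    hence "4 * gam * K * a * Xs \<le> 4 * gam^2 * K^2 * Xs^2 + a^2" by (simp add: power2_eq_square algebra_simps)
    hence "(4 * gam * K * a * Xs) / (2 * gam) \<le> (4 * gam^2 * K^2 * Xs^2 + a^2) / (2 * gam)"
      using gam by (intro divide_right_mono) auto
    moreover have "(4 * gam * K * a * Xs) / (2 * gam) = 2 * K * a * Xs" using gam by simp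
    moreover have "(4 * gam^2 * K^2 * Xs^2 + a^2) / (2 * gam) = 2 * gam * K^2 * Xs^2 + a^2 / (2 * gam)"
      using gam by (simp add: field_simps power2_eq_square)
    ultimately show ?thesis by simp
  qed
  have "2 * K * R \<le> 2 * K * (a * Xs + 2 * Gam)" using R K by (simp add: Xs_def)
  also have "\<dots> = 2 * K * a * Xs + 4 * Gam * K" by (simp add: algebra_simps)
  finally have h1: "2 * K * R \<le> 2 * K * a * Xs + 4 * Gam * K" .
  have a2: "a^2 / (2 * gam) = Gam^2 / (2 * gam * c)" using c by (simp add: a power_divide)
  have gk: "2 * gam * K^2 \<le> K / 4"
  proof -
    have "2 * gam * K^2 = 2 * (gam * K) * K" by (simp add: power2_eq_square)
    also have "\<dots> \<le> 2 * (1/8) * K" using gam K by (intro mult_right_mono) auto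
    finally show ?thesis by simp
  qed
  have gk2: "K / 4 \<le> 2 * Gam * K * (1 / sqrt c)"
  proof -
    have "2 * Gam * K * (1 / sqrt c) = 2 * K * a" unfolding a by simp
    also have "\<dots> \<ge> 2 * K * (1/8)" using a8 K by (intro mult_left_mono) auto
    finally show ?thesis by simp
  qed
  have e: "2 * gam * K^2 * S = 2 * gam * K^2 * Xs^2 - 2 * gam * K^2" by (simp add: Xs2 algebra_simps)
  have "2 * Gam * K * (2 + 1 / sqrt c) = 4 * Gam * K + 2 * Gam * K * (1 / sqrt c)" by (simp add: algebra_simps)
  thus ?thesis using h1 amgm a2 gk gk2 e by argo
qed


lemma grid_pos: "T > 0 \<Longrightarrow> a \<in> usc_grid T \<Longrightarrow> a > 0"
  by (auto simp: usc_grid_def)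

lemma grid_12: assumes "T \<ge> 2" shows "1 / real T \<in> usc_grid T" "2 / real T \<in> usc_grid T"
proof -
  have "log 2 (real T) \<ge> log 2 2" using assms by (subst log_le_cancel_iff) auto
  hence "log 2 (real T) \<ge> 1" by simp
  hence N: "usc_N T \<ge> 1" unfolding usc_N_def by linarith
  have "1 / real T = 2 ^ 0 / real T" by simp
  thus "1 / real T \<in> usc_grid T" unfolding usc_grid_def by blast
  have "2 / real T = 2 ^ 1 / real T" by simp
  thus "2 / real T \<in> usc_grid T" unfolding usc_grid_def using N by blast
qed

lemma experts_finite:
  assumes "finite As" "finite Ae" "finite Ac"
  shows "finite (usc_experts T As Ae Ac)"
proof -
  have g: "finite (usc_grid T)" unfolding usc_grid_def by simp
  show ?thesis unfolding usc_experts_def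
    using assms g by (intro finite_UnI finite_imageI finite_image_set2) auto
qed

lemma experts_card:
  assumes "finite As" "finite Ae" "finite Ac" "A \<in> Ae" "T \<ge> 2"
  shows "card (usc_experts T As Ae Ac) \<ge> 2"
proof -
  have sub: "{EExp A (1 / real T), EExp A (2 / real T)} \<subseteq> usc_experts T As Ae Ac"
    using grid_12[OF assms(5)] assms(4) unfolding usc_experts_def by blast
  have ne: "1 / real T \<noteq> 2 / real T" using assms(5) by simp
  have "card {EExp A (1 / real T), EExp A (2 / real T)} = 2" using ne by simp
  thus ?thesis using card_mono[OF experts_finite[OF assms(1-3)] sub] by simp
qed

lemma experts_out:
  assumes "T > 0" "\<forall>A\<in>As. \<forall>p>0. \<forall>h. A p h \<in> X" "\<forall>A\<in>Ae. \<forall>p>0. \<forall>h. A p h \<in> X" "\<forall>A\<in>Ac. \<forall>h. A h \<in> X"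
    "i \<in> usc_experts T As Ae Ac"
  shows "expert_out i h \<in> X"
  using assms grid_pos[OF assms(1)] unfolding usc_experts_def by auto


lemma main_regret:
  fixes X :: "'a::euclidean_space set"
    and D G :: real and T :: nat
    and f :: "nat \<Rightarrow> 'a \<Rightarrow> real" and g :: "nat \<Rightarrow> 'a \<Rightarrow> 'a"
    and As Ae :: "'a palg set" and Ac :: "'a alg set"
    and R :: "'a palg \<Rightarrow> real \<Rightarrow> real"
    and xbar :: 'a and \<alpha> \<alpha>h :: real
  assumes T2: "T \<ge> 2"
    and dom: "oco_domain X D" and Dpos: "D > 0" and Gpos: "G > 0"
    and fns: "oco_fns X G T f g"
    and fin: "finite As" "finite Ae" "finite Ac" and Ae_ne: "Ae \<noteq> {}"
    and As_out: "\<forall>A\<in>As. \<forall>p>0. \<forall>h. A p h \<in> X"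
    and Ae_out: "\<forall>A\<in>Ae. \<forall>p>0. \<forall>h. A p h \<in> X"
    and Ac_out: "\<forall>A\<in>Ac. \<forall>h. A h \<in> X"
    and R_bound: "\<forall>A\<in>Ae. \<forall>a>0. \<forall>f' g'.
        oco_fns X G T f' g' \<and> (\<forall>t\<in>{1..T}. exp_concave_on a X (f' t))
        \<longrightarrow> regret X T f' (\<lambda>t. A a (hist f' t)) \<le> R A a"
    and xbar: "xbar \<in> X"
    and \<alpha>: "1 / real T \<le> \<alpha>" "\<alpha> \<le> 1"
    and expc: "\<forall>t\<in>{1..T}. exp_concave_on \<alpha> X (f t)"
    and \<alpha>h: "\<alpha>h \<in> usc_grid T" "\<alpha>h \<le> \<alpha>" "\<alpha> \<le> 2 * \<alpha>h"
  shows "regret X T f (usc_x (usc_experts T As Ae Ac) f g G D xbar)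
           \<le> (MIN A\<in>Ae. R A \<alpha>h) + usc_add (card (usc_experts T As Ae Ac)) T G D \<alpha>"
proof -
  define E where "E = usc_experts T As Ae Ac"
  define LF where "LF = fst (usc_state E f g G D xbar T)"
  define lF where "lF = snd (usc_state E f g G D xbar T)"
  define eo where "eo i t = expert_out i (hist f t)" for i t
  define xs where "xs t = usc_x E f g G D xbar t" for t
  have T0: "T > 0" using T2 by simp
  have Xc: "convex X" and Xd: "\<And>x y. x \<in> X \<Longrightarrow> y \<in> X \<Longrightarrow> norm (x - y) \<le> D"
    using dom by (auto simp: oco_domain_def)
  have fnsD: "\<And>t x. t \<in> {1..T} \<Longrightarrow> x \<in> X \<Longrightarrow> (f t has_derivative (\<lambda>h. inner (g t x) h)) (at x within X) \<and> norm (g t x) \<le> G"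
    using fns by (auto simp: oco_fns_def)
  have "Min ((\<lambda>A. R A \<alpha>h) ` Ae) \<in> (\<lambda>A. R A \<alpha>h) ` Ae" using fin(2) Ae_ne by (intro Min_in) auto
  then obtain Ast where Astar: "Ast \<in> Ae" "R Ast \<alpha>h = (MIN A\<in>Ae. R A \<alpha>h)" by auto
  define k where "k = EExp Ast \<alpha>h"
  have finE: "finite E" unfolding E_def by (rule experts_finite[OF fin])
  have cardE: "card E \<ge> 2" unfolding E_def by (rule experts_card[OF fin Astar(1) T2])
  have kE: "k \<in> E" unfolding k_def E_def usc_experts_def using Astar(1) \<alpha>h(1) by blast
  have eoX: "eo i t \<in> X" if "i \<in> E" for i t
    unfolding eo_def using experts_out[OF T0 As_out Ae_out Ac_out] that by (simp add: E_def)
  have struct: "xs t = usc_point E f LF lF t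
     \<and> LF t = (\<lambda>i. (inner (g t (usc_point E f LF lF t)) (eo i t - xbar) + G * D) / (2 * G * D))
     \<and> lF t = (\<Sum>i\<in>E. amlp_p E LF lF t i * LF t i)" if "t \<in> {1..T}" for t
    using usc_structure[OF that, of E f g G D xbar] unfolding LF_def lF_def xs_def eo_def by simp
  have lmix: "\<And>t. t \<in> {1..T} \<Longrightarrow> lF t = (\<Sum>i\<in>E. amlp_p E LF lF t i * LF t i)"
    using struct by blast
  have pointX: "usc_point E f LF lF t \<in> X"
    if "(\<forall>i\<in>E. 0 \<le> amlp_p E LF lF t i) \<and> (\<Sum>i\<in>E. amlp_p E LF lF t i) = 1" for t
    unfolding usc_point_def using that eoX[unfolded eo_def]
    by (intro convex_sum[OF finE Xc]) auto
  have Lrange_step: "0 \<le> LF t i \<and> LF t i \<le> 1"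
    if t: "t \<in> {1..T}" and i: "i \<in> E" and xX: "usc_point E f LF lF t \<in> X" for t i
  proof -
    define q where "q = g t (usc_point E f LF lF t)"
    have qG: "norm q \<le> G" using fnsD[OF t xX] by (simp add: q_def)
    have "\<bar>inner q (eo i t - xbar)\<bar> \<le> norm q * norm (eo i t - xbar)" by (rule Cauchy_Schwarz_ineq2)
    also have "\<dots> \<le> G * D" using qG Xd[OF eoX[OF i] xbar] Gpos by (intro mult_mono) auto
    finally have b: "\<bar>inner q (eo i t - xbar)\<bar> \<le> G * D" .
    have GD: "G * D > 0" using Gpos Dpos by simp
    have "LF t i = (inner q (eo i t - xbar) + G * D) / (2 * G * D)" using struct[OF t] by (simp add: q_def)
    moreover have "0 \<le> (inner q (eo i t - xbar) + G * D) / (2 * G * D)"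
      using b GD Gpos Dpos by (intro divide_nonneg_pos) auto
    moreover have "(inner q (eo i t - xbar) + G * D) / (2 * G * D) \<le> 1"
      using b GD Gpos Dpos by (subst divide_le_eq_1_pos) (auto simp: abs_le_iff algebra_simps)
    ultimately show ?thesis by simp
  qed
  have ranges: "t \<le> T \<longrightarrow> (\<forall>s\<in>{1..t}. \<forall>i\<in>E. 0 \<le> LF s i \<and> LF s i \<le> 1)" for t
  proof (induction t)
    case 0
    then show ?case by simp
  next
    case (Suc t)
    show ?case
    proof
      assume St: "Suc t \<le> T"
      hence IH: "\<forall>s\<in>{1..t}. \<forall>i\<in>E. 0 \<le> LF s i \<and> LF s i \<le> 1" using Suc.IH by simp
      have w: "\<forall>i\<in>E. 0 < amlp_w (card E) LF lF t i"
      proof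
        fix i assume i: "i \<in> E"
        show "0 < amlp_w (card E) LF lF t i"
          by (rule w_pos[where E=E and L=LF and l=lF and T=t and t=t and i=i])
             (use finE cardE IH lmix St i in auto)
      qed
      have pp: "(\<forall>i\<in>E. 0 \<le> amlp_p E LF lF (Suc t) i) \<and> (\<Sum>i\<in>E. amlp_p E LF lF (Suc t) i) = 1"
        using p_generic[OF finE cardE, where L=LF and l=lF and t="Suc t"] w by simp
      have "\<forall>i\<in>E. 0 \<le> LF (Suc t) i \<and> LF (Suc t) i \<le> 1"
        using Lrange_step[OF _ _ pointX[OF pp]] St by simp
      thus "\<forall>s\<in>{1..Suc t}. \<forall>i\<in>E. 0 \<le> LF s i \<and> LF s i \<le> 1"
        using IH by (auto simp: le_Suc_eq)
    qed
  qed
  have Lr: "\<And>t i. t \<in> {1..T} \<Longrightarrow> i \<in> E \<Longrightarrow> 0 \<le> LF t i \<and> LF t i \<le> 1"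
    using ranges[of T] by auto
  have pT: "(\<forall>i\<in>E. 0 \<le> amlp_p E LF lF t i) \<and> (\<Sum>i\<in>E. amlp_p E LF lF t i) = 1"
    if t: "t \<in> {1..T}" for t
    by (rule p_props'[where E=E and L=LF and l=lF and T=T]) (use finE cardE Lr lmix t in auto)
  define Gam where "Gam = usc_Gamma (card E) T"
  define c where "c = ln (real (card E))"
  define r where "r t = lF t - LF t k" for t
  define SS where "SS = (\<Sum>t=1..T. (r t)^2)"
  have amlp: "(\<Sum>t=1..T. r t) \<le> Gam / sqrt c * sqrt (1 + SS) + 2 * Gam"
    unfolding r_def SS_def Gam_def c_def
    by (rule amlp_regret[where E=E and L=LF and l=lF and T=T and k=k]) (use finE cardE Lr lmix kE in auto)
  have c: "c \<ge> 1/2" unfolding c_def using cardE by (intro ln_ge_half) simp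
  have Gam3: "Gam \<ge> 3 * c"
  proof -
    have "0 \<le> ln (1 + real (card E) / (2 * exp 1) * (1 + ln (real T + 1)))"
      by (intro ln_ge_zero) (simp add: add_nonneg_nonneg)
    thus ?thesis by (simp add: Gam_def usc_Gamma_def c_def)
  qed
  have a8: "Gam / sqrt c \<ge> 1/8"
  proof -
    have sc: "sqrt c \<ge> 1/2"
    proof -
      have "sqrt (1/4) \<le> sqrt c" using c by (intro real_sqrt_le_mono) simp
      moreover have "sqrt (1/4::real) = 1/2" by (simp add: real_sqrt_divide)
      ultimately show ?thesis by simp
    qed
    have "3 * c / sqrt c = 3 * sqrt c" using c by (simp add: field_simps real_sqrt_mult_self)
    hence "3 * c / sqrt c \<ge> 3/2" using sc by simp
    moreover have "Gam / sqrt c \<ge> 3 * c / sqrt c" using Gam3 sc c by (intro divide_right_mono) auto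
    ultimately show ?thesis by linarith
  qed
  define gam where "gam = usc_beta G D \<alpha>"
  have al0: "\<alpha> > 0" using \<alpha>(1) T0 by (meson le_less_trans less_le_trans zero_less_divide_1_iff of_nat_0_less_iff)
  have GD: "G * D > 0" using Gpos Dpos by simp
  have gam0: "gam > 0" using al0 Gpos Dpos by (simp add: gam_def usc_beta_def)
  have gam8: "gam * (G * D) \<le> 1/8"
  proof -
    have "gam \<le> 1/2 * (1 / (4 * G * D))" unfolding gam_def usc_beta_def using min.cobounded1[of "1/(4*G*D)" \<alpha>] by linarith
    hence "gam * (G * D) \<le> 1/2 * (1 / (4 * G * D)) * (G * D)" using GD by (intro mult_right_mono) auto
    also have "\<dots> = 1/8" using Gpos Dpos by (simp add: field_simps)
    finally show ?thesis .
  qed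
  have round: "f t (xs t) - f t (eo k t) \<le> 2 * (G * D) * r t - 2 * gam * (G * D)^2 * (r t)^2"
    if t: "t \<in> {1..T}" for t
  proof -
    define x where "x = xs t"
    define q where "q = g t x"
    define p where "p i = amlp_p E LF lF t i" for i
    have xp: "x = usc_point E f LF lF t" using struct[OF t] by (simp add: x_def)
    have xX: "x \<in> X" using xp pointX[OF pT[OF t]] by simp
    have xsum: "x = (\<Sum>i\<in>E. p i *\<^sub>R eo i t)" using xp by (simp add: usc_point_def p_def eo_def)
    have psum: "(\<Sum>i\<in>E. p i) = 1" using pT[OF t] by (simp add: p_def)
    have LFi: "LF t i = (inner q (eo i t - xbar) + G * D) / (2 * G * D)" for i
      using struct[OF t] by (simp add: q_def x_def)
    have "x - xbar = (\<Sum>i\<in>E. p i *\<^sub>R eo i t) - (\<Sum>i\<in>E. p i) *\<^sub>R xbar" using xsum psum by simp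
    also have "\<dots> = (\<Sum>i\<in>E. p i *\<^sub>R (eo i t - xbar))"
      by (simp add: scaleR_sum_left sum_subtractf scaleR_diff_right)
    finally have "inner q (x - xbar) = (\<Sum>i\<in>E. p i * inner q (eo i t - xbar))"
      by (simp add: inner_sum_right)
    have lFt: "lF t = (\<Sum>i\<in>E. p i * ((inner q (eo i t - xbar) + G * D) / (2 * G * D)))"
      using struct[OF t] LFi by (simp add: p_def)
    also have "\<dots> = (\<Sum>i\<in>E. (p i * inner q (eo i t - xbar) + p i * (G * D)) / (2 * G * D))"
      by (intro sum.cong refl) (simp add: distrib_left)
    also have "\<dots> = (\<Sum>i\<in>E. p i * inner q (eo i t - xbar) + p i * (G * D)) / (2 * G * D)"
      by (rule sum_divide_distrib[symmetric])
    also have "(\<Sum>i\<in>E. p i * inner q (eo i t - xbar) + p i * (G * D))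
        = (\<Sum>i\<in>E. p i * inner q (eo i t - xbar)) + (\<Sum>i\<in>E. p i) * (G * D)"
      by (simp add: sum.distrib sum_distrib_right)
    finally have lFt2: "lF t = ((\<Sum>i\<in>E. p i * inner q (eo i t - xbar)) + (\<Sum>i\<in>E. p i) * (G * D)) / (2 * G * D)" .
    have lFx: "lF t = (inner q (x - xbar) + G * D) / (2 * G * D)"
      unfolding lFt2 psum \<open>inner q (x - xbar) = _\<close> by simp
    have rt: "2 * (G * D) * r t = inner q (x - eo k t)"
    proof -
      have "r t = ((inner q (x - xbar) + G * D) - (inner q (eo k t - xbar) + G * D)) / (2 * G * D)"
        unfolding r_def lFx LFi by (rule diff_divide_distrib[symmetric])
      also have "\<dots> = (inner q (x - xbar) - inner q (eo k t - xbar)) / (2 * G * D)" by simp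
      finally have "r t = (inner q (x - xbar) - inner q (eo k t - xbar)) / (2 * G * D)" .
      also have "inner q (x - xbar) - inner q (eo k t - xbar) = inner q (x - eo k t)"
        by (simp add: inner_diff_right)
      finally show ?thesis using Gpos Dpos by (simp add: field_simps)
    qed
    have "f t x - f t (eo k t) \<le> inner q (x - eo k t) - gam / 2 * (inner q (x - eo k t))^2"
      unfolding gam_def q_def
      by (rule exp_concave_tangent[OF Xc _ _ xX eoX[OF kE]])
         (use expc t fnsD[OF t] fnsD[OF t xX] Xd[OF xX eoX[OF kE]] Gpos Dpos al0 in auto)
    also have "\<dots> = 2 * (G * D) * r t - 2 * gam * (G * D)^2 * (r t)^2"
      unfolding rt[symmetric] by (simp add: power_mult_distrib power2_eq_square)
    finally show ?thesis by (simp add: x_def)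
  qed
  have "(\<Sum>t=1..T. f t (xs t) - f t (eo k t)) \<le> (\<Sum>t=1..T. 2 * (G * D) * r t - 2 * gam * (G * D)^2 * (r t)^2)"
    using round by (intro sum_mono) auto
  also have "\<dots> = 2 * (G * D) * (\<Sum>t=1..T. r t) - 2 * gam * (G * D)^2 * SS"
    by (simp add: SS_def sum_subtractf sum_distrib_left)
  also have "\<dots> \<le> 2 * Gam * (G * D) * (2 + 1 / sqrt c) + Gam^2 / (2 * gam * c)"
    by (rule final_arith[OF GD gam0 gam8 _ _ refl a8 amlp]) (use c in \<open>simp_all add: SS_def sum_nonneg\<close>)
  also have "\<dots> = usc_add (card E) T G D \<alpha>"
    by (simp add: usc_add_def Gam_def c_def gam_def mult.assoc)
  finally have meta: "(\<Sum>t=1..T. f t (xs t)) - (\<Sum>t=1..T. f t (eo k t)) \<le> usc_add (card E) T G D \<alpha>"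
    by (simp add: sum_subtractf)
  have ahp: "\<alpha>h > 0" by (rule grid_pos[OF T0 \<alpha>h(1)])
  have ecA: "\<forall>t\<in>{1..T}. exp_concave_on \<alpha>h X (f t)"
    using expc exp_concave_mono ahp \<alpha>h(2) by blast
  have Rb: "regret X T f (\<lambda>t. Ast \<alpha>h (hist f t)) \<le> R Ast \<alpha>h"
    using R_bound Astar(1) ahp fns ecA by blast
  have eok: "eo k t = Ast \<alpha>h (hist f t)" for t by (simp add: eo_def k_def)
  have "regret X T f (usc_x E f g G D xbar)
      = ((\<Sum>t=1..T. f t (xs t)) - (\<Sum>t=1..T. f t (eo k t))) + regret X T f (\<lambda>t. Ast \<alpha>h (hist f t))"
    by (simp add: regret_def xs_def eok)
  also have "\<dots> \<le> usc_add (card E) T G D \<alpha> + R Ast \<alpha>h" using meta Rb by linarith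
  finally show ?thesis using Astar(2) by (simp add: E_def)
qed

lemma le_div_self: "0 \<le> (x::real) \<Longrightarrow> 0 < a \<Longrightarrow> a \<le> 1 \<Longrightarrow> x \<le> x / a"
  by (simp add: le_divide_eq mult_left_le)

lemma asym_arith:
  fixes c lam Gam M al G D Q :: real
  assumes c1: "c \<ge> 1" and c2: "2 * c \<ge> 1 + lam" and lam: "lam > 0"
    and Gam0: "0 \<le> Gam" and GamM: "Gam \<le> M * (1 + lam)" and M0: "M \<ge> 0"
    and al: "0 < al" "al \<le> 1" and G: "G > 0" and D: "D > 0" and Q: "1 + lam \<le> Q * lam"
  shows "2 * Gam * G * D * (2 + 1 / sqrt c) + Gam^2 / (2 * usc_beta G D al * c)
      \<le> Q * (6 * (G * D) * M + 2 * M^2 * (4 * (G * D) + 1)) * lam / al"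
proof -
  define K where "K = G * D"
  have K: "K > 0" using G D by (simp add: K_def)
  define P where "P = 6 * K * M + 2 * M^2 * (4 * K + 1)"
  have P0: "P \<ge> 0" using K M0 by (simp add: P_def)
  have l1: "1 + lam > 0" using lam by simp
  have sc: "1 / sqrt c \<le> 1" using c1 by simp
  have A1: "2 * Gam * G * D * (2 + 1 / sqrt c) \<le> 6 * K * M * (1 + lam)"
  proof -
    have "2 * Gam * G * D * (2 + 1 / sqrt c) = 2 * K * Gam * (2 + 1 / sqrt c)" by (simp add: K_def)
    also have "\<dots> \<le> 2 * K * Gam * 3" using sc K Gam0 by (intro mult_left_mono) auto
    also have "\<dots> \<le> 2 * K * (M * (1 + lam)) * 3" using GamM K by (intro mult_right_mono mult_left_mono) auto
    finally show ?thesis by simp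
  qed
  have A1': "6 * K * M * (1 + lam) \<le> 6 * K * M * (1 + lam) / al"
  proof -
    have "6 * K * M * (1 + lam) \<ge> 0" using K M0 l1 by simp
    thus ?thesis using al by (intro le_div_self) auto
  qed
  have beta: "1 / (2 * usc_beta G D al) \<le> (4 * K + 1) / al"
  proof -
    have b: "2 * usc_beta G D al = min (1 / (4 * K)) al" by (simp add: usc_beta_def K_def mult.assoc)
    have bp: "min (1 / (4 * K)) al > 0" using K al by simp
    show ?thesis
    proof (cases "1 / (4 * K) \<le> al")
      case True
      hence "1 / (2 * usc_beta G D al) = 4 * K" using b K by (simp add: min_def)
      also have "4 * K \<le> 4 * K / al" using K al by (intro le_div_self) auto
      also have "\<dots> \<le> (4 * K + 1) / al" using al by (intro divide_right_mono) auto
      finally show ?thesis .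
    next
      case False
      hence "1 / (2 * usc_beta G D al) = 1 / al" using b by (simp add: min_def)
      also have "\<dots> \<le> (4 * K + 1) / al" using al K by (intro divide_right_mono) auto
      finally show ?thesis .
    qed
  qed
  have A3: "Gam^2 / c \<le> 2 * M^2 * (1 + lam)"
  proof -
    have "Gam^2 \<le> (M * (1 + lam))^2" using Gam0 GamM by (intro power_mono) auto
    hence "Gam^2 / c \<le> (M * (1 + lam))^2 / c" using c1 by (intro divide_right_mono) auto
    also have "\<dots> \<le> (M * (1 + lam))^2 / ((1 + lam) / 2)"
      using c2 l1 by (intro divide_left_mono) auto
    also have "\<dots> = 2 * M^2 * (1 + lam)" using l1 by (simp add: power2_eq_square field_simps)
    finally show ?thesis .
  qed
  have A4: "Gam^2 / (2 * usc_beta G D al * c) \<le> 2 * M^2 * (1 + lam) * ((4 * K + 1) / al)"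
  proof -
    have "Gam^2 / (2 * usc_beta G D al * c) = (Gam^2 / c) * (1 / (2 * usc_beta G D al))" by simp
    also have "\<dots> \<le> 2 * M^2 * (1 + lam) * ((4 * K + 1) / al)"
    proof (rule mult_mono[OF A3 beta])
      show "0 \<le> 2 * M^2 * (1 + lam)" using l1 by simp
      have "usc_beta G D al > 0" using K al G D by (simp add: usc_beta_def)
      thus "0 \<le> 1 / (2 * usc_beta G D al)" by simp
    qed
    finally show ?thesis .
  qed
  have "2 * Gam * G * D * (2 + 1 / sqrt c) + Gam^2 / (2 * usc_beta G D al * c)
      \<le> 6 * K * M * (1 + lam) / al + 2 * M^2 * (1 + lam) * ((4 * K + 1) / al)"
    using A1 A1' A4 by linarith
  also have "\<dots> = P * (1 + lam) / al" using al by (simp add: P_def field_simps)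
  also have "\<dots> \<le> P * (Q * lam) / al" using P0 Q al by (intro divide_right_mono mult_left_mono) auto
  finally show ?thesis by (simp add: P_def K_def algebra_simps)
qed


lemma ln3: "ln (3::real) > 1"
proof -
  have "exp 1 < (3::real)" using e_less_272 by simp
  thus ?thesis by (metis ln_exp ln_less_cancel_iff exp_gt_zero zero_less_numeral)
qed

lemma ln2: "ln (2::real) \<le> 1" "ln (2::real) \<ge> 1/2"
proof -
  have "1 + 1 \<le> exp (1::real)" by (rule exp_ge_add_one_self)
  hence "exp 1 \<ge> (2::real)" by simp
  thus "ln (2::real) \<le> 1" by (metis ln_exp ln_le_cancel_iff exp_gt_zero zero_less_numeral)
  show "ln (2::real) \<ge> 1/2" by (rule ln_ge_half) simp
qed

lemma asym:
  assumes G: "G > 0" and D: "D > 0"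
  shows "\<forall>k::nat. \<exists>C::real. \<forall>T'::nat. \<forall>\<alpha>'::real. \<forall>ns ne nc :: nat.
            T' \<ge> 3 \<and> 1 / real T' \<le> \<alpha>' \<and> \<alpha>' \<le> 1 \<and> 1 \<le> ne \<and> ns \<le> k \<and> ne \<le> k \<and> nc \<le> k
            \<longrightarrow> usc_add ((ns + ne) * (usc_N T' + 1) + nc) T' G D \<alpha>' \<le> C * ln (ln (real T')) / \<alpha>'"
proof
  fix k :: nat
  define \<kappa> where "\<kappa> = real k + 1"
  have \<kappa>1: "\<kappa> \<ge> 1" by (simp add: \<kappa>_def)
  define M0 where "M0 = 3 * ln (12 * \<kappa>) + ln (37 * \<kappa>)"
  define M where "M = M0 + 5"
  define l0 where "l0 = ln (ln (3::real))"
  define Q where "Q = 1 + 1 / l0"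
  have l0: "l0 > 0" using ln3 by (simp add: l0_def)
  have M00: "M0 \<ge> 0" using \<kappa>1 by (simp add: M0_def)
  show "\<exists>C::real. \<forall>T'::nat. \<forall>\<alpha>'::real. \<forall>ns ne nc :: nat.
            T' \<ge> 3 \<and> 1 / real T' \<le> \<alpha>' \<and> \<alpha>' \<le> 1 \<and> 1 \<le> ne \<and> ns \<le> k \<and> ne \<le> k \<and> nc \<le> k
            \<longrightarrow> usc_add ((ns + ne) * (usc_N T' + 1) + nc) T' G D \<alpha>' \<le> C * ln (ln (real T')) / \<alpha>'"
  proof (intro exI[of _ "Q * (6 * (G * D) * M + 2 * M^2 * (4 * (G * D) + 1))"] allI impI, elim conjE)
    fix T' :: nat and al :: real and ns ne nc :: nat
    assume T3: "T' \<ge> 3" and al: "1 / real T' \<le> al" "al \<le> 1" and ne: "1 \<le> ne"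
      and ks: "ns \<le> k" "ne \<le> k" "nc \<le> k"
    define Lg where "Lg = ln (real T')"
    define lam where "lam = ln Lg"
    define N where "N = usc_N T'"
    define n where "n = (ns + ne) * (N + 1) + nc"
    define c where "c = ln (real n)"
    define Gam where "Gam = usc_Gamma n T'"
    have T3r: "real T' \<ge> 3" using T3 by simp
    have al0: "al > 0" using al(1) T3r by (smt (verit) divide_pos_pos)
    have Lg3: "Lg \<ge> ln 3" unfolding Lg_def using T3r by simp
    have Lg1: "Lg > 1" using Lg3 ln3 by linarith
    have lam0: "lam \<ge> l0" unfolding lam_def l0_def using Lg3 ln3 by simp
    have lampos: "lam > 0" using lam0 l0 by linarith
    have Qlam: "1 + lam \<le> Q * lam"
    proof -
      have "1 \<le> lam / l0" using lam0 l0 by simp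
      hence "1 + lam \<le> lam / l0 + lam" by simp
      also have "\<dots> = Q * lam" by (simp add: Q_def algebra_simps)
      finally show ?thesis .
    qed
    have log2: "log 2 (real T') = Lg / ln 2" by (simp add: log_def Lg_def)
    have log_lo: "log 2 (real T') \<ge> Lg"
    proof -
      have "Lg / ln 2 \<ge> Lg / 1" using ln2 Lg1 by (intro divide_left_mono) auto
      thus ?thesis using log2 by simp
    qed
    have log_hi: "log 2 (real T') \<le> 2 * Lg"
    proof -
      have "Lg / ln 2 \<le> Lg / (1/2)" using ln2 Lg1 by (intro divide_left_mono) auto
      thus ?thesis using log2 by simp
    qed
    have Nreal: "real N \<ge> log 2 (real T')" "real N \<le> log 2 (real T') + 1"
    proof -
      have lp: "log 2 (real T') \<ge> 0" using log_lo Lg1 by linarith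
      have "real N = real_of_int \<lceil>log 2 (real T')\<rceil>"
        unfolding N_def usc_N_def using lp by simp
      thus "real N \<ge> log 2 (real T')" "real N \<le> log 2 (real T') + 1"
        by (simp_all add: le_of_int_ceiling)
    qed
    have N2: "N \<ge> 2"
    proof -
      have "real N > 1" using Nreal(1) log_lo Lg1 by linarith
      thus ?thesis by simp
    qed
    have n_lo: "real n \<ge> real N + 1"
    proof -
      have "N + 1 \<le> (ns + ne) * (N + 1)" using ne mult_le_mono1[of 1 "ns + ne" "N + 1"] by simp
      hence "N + 1 \<le> n" by (simp add: n_def)
      thus ?thesis by (metis of_nat_Suc of_nat_le_iff Suc_eq_plus1 add.commute)
    qed
    have n3: "real n \<ge> 3" using n_lo N2 by simp
    have nLg: "real n \<ge> Lg" using n_lo Nreal(1) log_lo by linarith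
    have n_hi: "real n \<le> 12 * \<kappa> * Lg"
    proof -
      have "real n = real (ns + ne) * (real N + 1) + real nc" by (simp add: n_def algebra_simps)
      also have "\<dots> \<le> (2 * \<kappa>) * (real N + 1) + \<kappa> * (real N + 1)"
      proof (intro add_mono mult_right_mono)
        show "real (ns + ne) \<le> 2 * \<kappa>" using ks by (simp add: \<kappa>_def)
        have "real nc \<le> \<kappa>" using ks by (simp add: \<kappa>_def)
        also have "\<kappa> \<le> \<kappa> * (real N + 1)" using \<kappa>1 by simp
        finally show "real nc \<le> \<kappa> * (real N + 1)" .
      qed simp
      also have "\<dots> = 3 * \<kappa> * (real N + 1)" by (simp add: algebra_simps)
      also have "\<dots> \<le> 3 * \<kappa> * (4 * Lg)"
      proof -
        have "real N + 1 \<le> 2 * Lg + 2" using Nreal(2) log_hi by linarith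
        also have "\<dots> \<le> 4 * Lg" using Lg1 by linarith
        finally show ?thesis using \<kappa>1 by (intro mult_left_mono) auto
      qed
      finally show ?thesis by simp
    qed
    have c1: "c \<ge> 1"
    proof -
      have "ln (real n) \<ge> ln 3" using n3 by simp
      thus ?thesis using ln3 by (simp add: c_def)
    qed
    have clam: "c \<ge> lam" unfolding c_def lam_def using nLg Lg1 by simp
    have c2: "2 * c \<ge> 1 + lam" using c1 clam by linarith
    have lnLg: "ln (Lg^2) = 2 * lam" using Lg1 by (simp add: lam_def ln_realpow)
    have Gam_hi: "Gam \<le> M * (1 + lam)"
    proof -
      have "c \<le> ln (12 * \<kappa> * Lg)" unfolding c_def using n_hi n3 \<kappa>1 Lg1 by (subst ln_le_cancel_iff) auto
      also have "\<dots> = ln (12 * \<kappa>) + lam" using \<kappa>1 Lg1 by (simp add: ln_mult lam_def)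
      finally have cb: "c \<le> ln (12 * \<kappa>) + lam" .
      have lnT1: "1 + ln (real T' + 1) \<le> 3 * Lg"
      proof -
        have "ln (real T' + 1) \<le> ln (2 * real T')" using T3r by simp
        also have "\<dots> = ln 2 + Lg" using T3r by (simp add: ln_mult Lg_def)
        finally show ?thesis using ln2 Lg1 by linarith
      qed
      have e1: "real n / (2 * exp 1) \<le> real n"
      proof -
        have "2 * exp 1 \<ge> (1::real)" using exp_ge_add_one_self[of 1] by simp
        thus ?thesis using n3 by (simp add: divide_le_eq mult_le_cancel_left1)
      qed
      have inner: "1 + real n / (2 * exp 1) * (1 + ln (real T' + 1)) \<le> 37 * \<kappa> * Lg^2"
      proof -
        have "real n / (2 * exp 1) * (1 + ln (real T' + 1)) \<le> real n * (3 * Lg)"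
        proof (rule mult_mono[OF e1 lnT1])
          show "0 \<le> real n" by simp
          have "ln (real T' + 1) \<ge> 0" by simp
          thus "0 \<le> 1 + ln (real T' + 1)" by simp
        qed
        also have "\<dots> \<le> (12 * \<kappa> * Lg) * (3 * Lg)" using n_hi Lg1 by (intro mult_right_mono) auto
        finally have "1 + real n / (2 * exp 1) * (1 + ln (real T' + 1)) \<le> 1 + 36 * \<kappa> * Lg^2"
          by (simp add: power2_eq_square algebra_simps)
        also have "\<dots> \<le> 37 * \<kappa> * Lg^2"
        proof -
          have L2: "1 \<le> Lg^2" using Lg1 by (intro one_le_power) simp
          have "1 * 1 \<le> \<kappa> * Lg^2" using \<kappa>1 L2 by (intro mult_mono) auto
          hence "1 \<le> \<kappa> * Lg^2" by simp
          thus ?thesis by simp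
        qed
        finally show ?thesis .
      qed
      have ipos: "0 < 1 + real n / (2 * exp 1) * (1 + ln (real T' + 1))"
        by (intro add_pos_nonneg) auto
      have "ln (1 + real n / (2 * exp 1) * (1 + ln (real T' + 1))) \<le> ln (37 * \<kappa> * Lg^2)"
        using inner ipos by simp
      also have "\<dots> = ln (37 * \<kappa>) + 2 * lam" using \<kappa>1 Lg1 lnLg by (simp add: ln_mult)
      finally have ib: "ln (1 + real n / (2 * exp 1) * (1 + ln (real T' + 1))) \<le> ln (37 * \<kappa>) + 2 * lam" .
      have "Gam = 3 * c + ln (1 + real n / (2 * exp 1) * (1 + ln (real T' + 1)))"
        by (simp add: Gam_def usc_Gamma_def c_def)
      also have "\<dots> \<le> M0 + 5 * lam" using cb ib by (simp add: M0_def)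
      also have "\<dots> \<le> M * (1 + lam)" using M00 lampos by (simp add: M_def algebra_simps)
      finally show ?thesis .
    qed
    have Gam0: "Gam \<ge> 0"
    proof -
      have "0 \<le> ln (1 + real n / (2 * exp 1) * (1 + ln (real T' + 1)))"
        by (intro ln_ge_zero) (simp add: add_nonneg_nonneg)
      thus ?thesis using c1 by (simp add: Gam_def usc_Gamma_def c_def)
    qed
    have M0': "M \<ge> 0" using M00 by (simp add: M_def)
    have "usc_add n T' G D al = 2 * Gam * G * D * (2 + 1 / sqrt c) + Gam^2 / (2 * usc_beta G D al * c)"
      by (simp add: usc_add_def Gam_def c_def)
    also have "\<dots> \<le> Q * (6 * (G * D) * M + 2 * M^2 * (4 * (G * D) + 1)) * lam / al"
      by (rule asym_arith[OF c1 c2 lampos Gam0 Gam_hi M0' al0 al(2) G D Qlam])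
    finally show "usc_add ((ns + ne) * (usc_N T' + 1) + nc) T' G D al
        \<le> Q * (6 * (G * D) * M + 2 * M^2 * (4 * (G * D) + 1)) * ln (ln (real T')) / al"
      by (simp add: n_def N_def lam_def Lg_def)
  qed
qed

theorem theorem2:
  fixes X :: "'a::euclidean_space set"
    and D G :: real and T :: nat
    and f :: "nat \<Rightarrow> 'a \<Rightarrow> real" and g :: "nat \<Rightarrow> 'a \<Rightarrow> 'a"
    and As Ae :: "'a palg set" and Ac :: "'a alg set"
    and R :: "'a palg \<Rightarrow> real \<Rightarrow> real"
    and xbar :: 'a and \<alpha> \<alpha>h :: real
  assumes T2: "T \<ge> 2"
    and dom: "oco_domain X D" and Dpos: "D > 0" and Gpos: "G > 0"
    and fns: "oco_fns X G T f g"
    and fin: "finite As" "finite Ae" "finite Ac" and Ae_ne: "Ae \<noteq> {}"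
    and As_out: "\<forall>A\<in>As. \<forall>p>0. \<forall>h. A p h \<in> X"
    and Ae_out: "\<forall>A\<in>Ae. \<forall>p>0. \<forall>h. A p h \<in> X"
    and Ac_out: "\<forall>A\<in>Ac. \<forall>h. A h \<in> X"
    and R_bound: "\<forall>A\<in>Ae. \<forall>a>0. \<forall>f' g'.
        oco_fns X G T f' g' \<and> (\<forall>t\<in>{1..T}. exp_concave_on a X (f' t))
        \<longrightarrow> regret X T f' (\<lambda>t. A a (hist f' t)) \<le> R A a"
    and xbar: "xbar \<in> X"
    and \<alpha>: "1 / real T \<le> \<alpha>" "\<alpha> \<le> 1"
    and expc: "\<forall>t\<in>{1..T}. exp_concave_on \<alpha> X (f t)"
    and \<alpha>h: "\<alpha>h \<in> usc_grid T" "\<alpha>h \<le> \<alpha>" "\<alpha> \<le> 2 * \<alpha>h"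
  shows "regret X T f (usc_x (usc_experts T As Ae Ac) f g G D xbar)
           \<le> (MIN A\<in>Ae. R A \<alpha>h) + usc_add (card (usc_experts T As Ae Ac)) T G D \<alpha>
       \<and> (\<forall>k::nat. \<exists>C::real. \<forall>T'::nat. \<forall>\<alpha>'::real. \<forall>ns ne nc :: nat.
            T' \<ge> 3 \<and> 1 / real T' \<le> \<alpha>' \<and> \<alpha>' \<le> 1 \<and> 1 \<le> ne \<and> ns \<le> k \<and> ne \<le> k \<and> nc \<le> k
            \<longrightarrow> usc_add ((ns + ne) * (usc_N T' + 1) + nc) T' G D \<alpha>' \<le> C * ln (ln (real T')) / \<alpha>')"
proof -
  have h1: "regret X T f (usc_x (usc_experts T As Ae Ac) f g G D xbar)
           \<le> (MIN A\<in>Ae. R A \<alpha>h) + usc_add (card (usc_experts T As Ae Ac)) T G D \<alpha>"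
    by (rule main_regret[OF T2 dom Dpos Gpos fns fin Ae_ne As_out Ae_out Ac_out R_bound xbar \<alpha> expc \<alpha>h])
  have h2: "\<forall>k::nat. \<exists>C::real. \<forall>T'::nat. \<forall>\<alpha>'::real. \<forall>ns ne nc :: nat.
            T' \<ge> 3 \<and> 1 / real T' \<le> \<alpha>' \<and> \<alpha>' \<le> 1 \<and> 1 \<le> ne \<and> ns \<le> k \<and> ne \<le> k \<and> nc \<le> k
            \<longrightarrow> usc_add ((ns + ne) * (usc_N T' + 1) + nc) T' G D \<alpha>' \<le> C * ln (ln (real T')) / \<alpha>'"
    by (rule asym[OF Gpos Dpos])
  show ?thesis using h1 h2 by blast
qed

end
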